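(* Let $\Lambda\subset\mathbb B_d$ be an interpolating sequence and let $\kappa$ be a non-negative integer. Let $\mathfrak a\subset\mathcal M_d$ be an ideal such that $\mathfrak a\supset\mathfrak v_\kappa(\Lambda)$. Then for every $z\in\mathcal Z_{\mathbb B_d}(\mathfrak a)$, the polynomial order of $\mathfrak a$ at $z$ is at most $\kappa$.
   Context: $\mathbb B_d$ is the open unit ball of $\mathbb C^d$; $\mathcal M_d$ is the multiplier algebra of the Drury–Arveson space $H^2_d$ (RKHS on $\mathbb B_d$ with kernel $(1-\langle z,w\rangle)^{-1}$). $\Lambda$ is interpolating if every bounded function on $\Lambda$ is the restriction of an element of $\mathcal M_d$. $\mathfrak v_\kappa(\Lambda)$: the $\psi\in\mathcal M_d$ whose partial derivatives $\partial^\alpha\psi/\partial x^\alpha$, $|\alpha|\le\kappa$, all vanish on $\Lambda$. $\mathcal Z_{\mathbb B_d}(F)$ is the common zero set in $\mathbb B_d$ of a set of functions $F$. For $z\in\mathbb C^d$, $[f]_z$ denotes the germ at $z$ of a function holomorphic near $z$, in the ring $\mathcal O(z)$ of such germs; for a set $F$ of such functions, $\mathfrak p(F,z)=\{p\in\mathbb C[x_1,\dots,x_d]:[p]_z\in\langle[f]_z:f\in F\rangle\}$ (ideal generated in $\mathcal O(z)$). $\mathfrak m_z=\langle x_1-z_1,\dots,x_d-z_d\rangle\subset\mathbb C[x_1,\dots,x_d]$. When $z$ is an isolated point of the common zero set of $F$, some power of $\mathfrak m_z$ lies in $\mathfrak p(F,z)$, and the polynomial order of $F$ at $z$ is the smallest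 positive integer $\kappa'$ with $\mathfrak m_z^{\kappa'+1}\subset\mathfrak p(F,z)$. (Here $\mathcal Z_{\mathbb B_d}(\mathfrak a)\subset\Lambda$ is discrete, so the polynomial order is defined.) *)

theory Defs
  imports "HOL-Analysis.Analysis"
begin

text \<open>Points of \<open>\<complex>^d\<close> are vectors \<open>complex ^ 'n\<close> (d = CARD('n)).
  Functions on the ball are total functions \<open>complex ^ 'n \<Rightarrow> complex\<close>;
  only their values on the ball matter.\<close>

definition cinner :: "complex ^ 'n \<Rightarrow> complex ^ 'n \<Rightarrow> complex" where
  "cinner z w = (\<Sum>i\<in>UNIV. z $ i * cnj (w $ i))"

abbreviation unit_ball :: "(complex ^ 'n) set" where
  "unit_ball \<equiv> ball 0 1"

definition DA_kernel :: "complex ^ 'n \<Rightarrow> complex ^ 'n \<Rightarrow> complex" where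
  "DA_kernel z w = 1 / (1 - cinner z w)"

text \<open>Membership in the reproducing kernel Hilbert space \<open>H^2_d\<close> with kernel
  \<open>DA_kernel\<close>: the functional \<open>\<Sum> a_i k_{w_i} \<mapsto> \<Sum> conj(a_i) f(w_i)\<close> is bounded
  on the span of the kernel functions (Aronszajn/Moore).\<close>
definition DA_space :: "(complex ^ 'n \<Rightarrow> complex) set" where
  "DA_space = {f. \<exists>C. \<forall>(m::nat) (w::nat \<Rightarrow> complex ^ 'n) (a::nat \<Rightarrow> complex).
       (\<forall>i<m. w i \<in> unit_ball) \<longrightarrow>
       (cmod (\<Sum>i<m. cnj (a i) * f (w i)))\<^sup>2
         \<le> C * Re (\<Sum>i<m. \<Sum>j<m. a i * cnj (a j) * DA_kernel (w j) (w i))}"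

definition mult_DA :: "(complex ^ 'n \<Rightarrow> complex) set" where
  "mult_DA = {\<phi>. \<forall>f\<in>DA_space. (\<lambda>z. \<phi> z * f z) \<in> DA_space}"

definition interpolating :: "(complex ^ 'n) set \<Rightarrow> bool" where
  "interpolating \<Lambda> \<longleftrightarrow> \<Lambda> \<subseteq> unit_ball \<and>
     (\<forall>g :: complex ^ 'n \<Rightarrow> complex. bounded (g ` \<Lambda>) \<longrightarrow>
        (\<exists>\<phi>\<in>mult_DA. \<forall>y\<in>\<Lambda>. \<phi> y = g y))"

definition ideal_Md :: "(complex ^ 'n \<Rightarrow> complex) set \<Rightarrow> bool" where
  "ideal_Md I \<longleftrightarrow> I \<subseteq> mult_DA \<and> (\<lambda>_. 0) \<in> I \<and>
     (\<forall>f\<in>I. \<forall>g\<in>I. (\<lambda>z. f z + g z) \<in> I) \<and>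
     (\<forall>\<phi>\<in>mult_DA. \<forall>f\<in>I. (\<lambda>z. \<phi> z * f z) \<in> I)"

definition cpartial :: "'n \<Rightarrow> (complex ^ 'n \<Rightarrow> complex) \<Rightarrow> (complex ^ 'n \<Rightarrow> complex)" where
  "cpartial i f = (\<lambda>z. deriv (\<lambda>t. f (z + (\<chi> j. if j = i then t else 0))) 0)"

text \<open>Iterated partial derivative along a list of coordinate indices; a
  multi-index \<open>\<alpha>\<close> with \<open>|\<alpha>| = length is\<close> corresponds to such a list
  (for holomorphic functions the order is irrelevant).\<close>
definition cpartials :: "'n list \<Rightarrow> (complex ^ 'n \<Rightarrow> complex) \<Rightarrow> (complex ^ 'n \<Rightarrow> complex)" where
  "cpartials is f = foldr cpartial is f"

definition vanish_ideal :: "nat \<Rightarrow> (complex ^ 'n) set \<Rightarrow> (complex ^ 'n \<Rightarrow> complex) set" where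
  "vanish_ideal \<kappa> \<Lambda> = {\<psi>\<in>mult_DA. \<forall>is. length is \<le> \<kappa> \<longrightarrow> (\<forall>y\<in>\<Lambda>. cpartials is \<psi> y = 0)}"

definition zero_set_ball :: "(complex ^ 'n \<Rightarrow> complex) set \<Rightarrow> (complex ^ 'n) set" where
  "zero_set_ball F = {z\<in>unit_ball. \<forall>f\<in>F. f z = 0}"

definition holo_on :: "(complex ^ 'n \<Rightarrow> complex) \<Rightarrow> (complex ^ 'n) set \<Rightarrow> bool" where
  "holo_on f U \<longleftrightarrow> (\<forall>x\<in>U. \<exists>L. (f has_derivative L) (at x) \<and>
                        (\<forall>(c::complex) v. L (c *s v) = c * L v))"

definition monom_at :: "complex ^ 'n \<Rightarrow> ('n \<Rightarrow> nat) \<Rightarrow> complex ^ 'n \<Rightarrow> complex" where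
  "monom_at c \<beta> x = (\<Prod>i\<in>UNIV. (x $ i - c $ i) ^ \<beta> i)"

definition is_poly :: "(complex ^ 'n \<Rightarrow> complex) \<Rightarrow> bool" where
  "is_poly p \<longleftrightarrow> (\<exists>A coef. finite A \<and>
      (\<forall>x. p x = (\<Sum>\<alpha>\<in>A. coef \<alpha> * monom_at 0 \<alpha> x)))"

definition mdeg :: "('n::finite \<Rightarrow> nat) \<Rightarrow> nat" where
  "mdeg \<beta> = (\<Sum>i\<in>UNIV. \<beta> i)"

text \<open>\<open>\<m>_z^k\<close>: the ideal of \<open>\<complex>[x_1,\<dots>,x_d]\<close> generated by all products of
  \<open>k\<close> of the generators \<open>x_i - z_i\<close>.\<close>
definition maxideal_pow :: "complex ^ 'n \<Rightarrow> nat \<Rightarrow> (complex ^ 'n \<Rightarrow> complex) set" where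
  "maxideal_pow z k = {p. \<exists>B q. finite B \<and> (\<forall>\<beta>\<in>B. mdeg \<beta> = k \<and> is_poly (q \<beta>)) \<and>
      (\<forall>x. p x = (\<Sum>\<beta>\<in>B. q \<beta> x * monom_at z \<beta> x))}"

text \<open>\<open>\<p>(F,z)\<close>: polynomials whose germ at \<open>z\<close> lies in the ideal of \<open>\<O>(z)\<close>
  generated by the germs of elements of \<open>F\<close>.\<close>
definition poly_germ_ideal :: "(complex ^ 'n \<Rightarrow> complex) set \<Rightarrow> complex ^ 'n \<Rightarrow> (complex ^ 'n \<Rightarrow> complex) set" where
  "poly_germ_ideal F z = {p. is_poly p \<and>
     (\<exists>U (m::nat) f g. open U \<and> z \<in> U \<and> (\<forall>i<m. f i \<in> F \<and> holo_on (g i) U) \<and>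
        (\<forall>x\<in>U. p x = (\<Sum>i<m. g i x * f i x)))}"

definition poly_order :: "(complex ^ 'n \<Rightarrow> complex) set \<Rightarrow> complex ^ 'n \<Rightarrow> nat" where
  "poly_order F z = (LEAST k. maxideal_pow z (k + 1) \<subseteq> poly_germ_ideal F z)"

end

theory Submission
  imports Defs "HOL-Complex_Analysis.Complex_Analysis"
begin

definition SH :: "(complex^'n) set \<Rightarrow> (complex^'n \<Rightarrow> complex) \<Rightarrow> bool" where
  "SH U f \<longleftrightarrow> continuous_on U f \<and> (\<forall>y\<in>U. \<forall>i. (\<lambda>t. f (y + axis i t)) field_differentiable (at 0))"

lemma cpartial_axis: "cpartial i f z = deriv (\<lambda>t. f (z + axis i t)) 0"
  by (simp add: cpartial_def axis_def)

lemma axis_add: "axis i a + axis i b = axis i (a + (b::complex))"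
  by (simp add: axis_def vec_eq_iff)

lemma norm_axis: "norm (axis i (t::complex)) = cmod t"
proof -
  have "norm (axis i t) = sqrt (\<Sum>j\<in>UNIV. (norm (axis i t $ j))\<^sup>2)"
    by (simp add: norm_vec_def L2_set_def)
  also have "(\<lambda>j. (norm (axis i t $ j))\<^sup>2) = (\<lambda>j. if j = i then (cmod t)\<^sup>2 else 0)"
    by (auto simp: axis_def)
  finally show ?thesis by simp
qed

lemma axis_zero [simp]: "axis i (0::complex) = 0"
  by (simp add: axis_def vec_eq_iff)

lemma axis_scaleR: "axis i (r *\<^sub>R (x::complex)) = r *\<^sub>R axis i x"
  by (simp add: axis_def vec_eq_iff)

lemma bounded_linear_axis: "bounded_linear (axis i :: complex \<Rightarrow> complex^'n)"
  by (rule bounded_linear_intro[where K=1]) (auto simp: axis_add norm_axis axis_scaleR)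

lemma isCont_axis [continuous_intros]: "isCont (\<lambda>t. y + axis i (t::complex)) x"
  using bounded_linear_axis[of i] by (intro continuous_intros) (simp add: linear_continuous_at)

lemma ev_axis:
  fixes y :: "complex^'n"
  assumes "open U" "y \<in> U"
  shows "eventually (\<lambda>t. y + axis i t \<in> U) (nhds 0)"
proof -
  obtain e where e: "e > 0" "ball y e \<subseteq> U" using assms openE by blast
  have "eventually (\<lambda>t. t \<in> ball (0::complex) e) (nhds 0)"
    using e by (intro eventually_nhds_in_open) auto
  then show ?thesis
  proof (rule eventually_mono)
    fix t :: complex assume "t \<in> ball 0 e"
    then have "y + axis i t \<in> ball y e" by (simp add: dist_norm norm_axis)
    then show "y + axis i t \<in> U" using e by blast
  qed
qed

lemma SH_line_deriv:
  assumes "SH U f" "y + axis i t0 \<in> U"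
  shows "((\<lambda>t. f (y + axis i t)) has_field_derivative cpartial i f (y + axis i t0)) (at t0)"
proof -
  let ?w = "y + axis i t0"
  have "(\<lambda>s. f (?w + axis i s)) field_differentiable (at 0)"
    using assms unfolding SH_def by blast
  then have "((\<lambda>s. f (?w + axis i s)) has_field_derivative cpartial i f ?w) (at (t0 + (-t0)))"
    by (simp add: cpartial_axis DERIV_deriv_iff_field_differentiable)
  then have "((\<lambda>t. f (?w + axis i (t + (-t0)))) has_field_derivative cpartial i f ?w) (at t0)"
    using DERIV_shift[of "\<lambda>s. f (?w + axis i s)" "cpartial i f ?w" t0 "-t0"] by simp
  moreover have "?w + axis i (t + (-t0)) = y + axis i t" for t
    by (simp add: add.assoc axis_add)
  ultimately show ?thesis by (simp only:)
qed

lemma SH_diff_at: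
  assumes "SH U f" "y \<in> U"
  shows "((\<lambda>t. f (y + axis i t)) has_field_derivative cpartial i f y) (at 0)"
  using SH_line_deriv[of U f y i 0] assms by simp

lemma SH_cong:
  assumes "SH U g" "open U" "\<And>x. x \<in> U \<Longrightarrow> f x = g x"
  shows "SH U f"
  unfolding SH_def
proof safe
  show "continuous_on U f" using assms continuous_on_cong unfolding SH_def by metis
next
  fix y i assume y: "y \<in> U"
  have ev: "eventually (\<lambda>t. y + axis i t \<in> U) (nhds 0)"
    using ev_axis[OF assms(2) y] .
  have "(\<lambda>t. g (y + axis i t)) field_differentiable (at 0)"
    using assms y unfolding SH_def by blast
  then obtain D where D: "((\<lambda>t. g (y + axis i t)) has_field_derivative D) (at 0)"
    by (auto simp: field_differentiable_def)
  have "((\<lambda>t. f (y + axis i t)) has_field_derivative D) (at 0)"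
    by (rule DERIV_cong_ev[THEN iffD2, OF refl _ refl D]) (use ev assms in \<open>auto elim!: eventually_mono\<close>)
  then show "(\<lambda>t. f (y + axis i t)) field_differentiable (at 0)"
    by (auto simp: field_differentiable_def)
qed

lemma cpartial_cong:
  assumes "open U" "x \<in> U" "\<And>x. x \<in> U \<Longrightarrow> f x = g x"
  shows "cpartial i f x = cpartial i g x"
proof -
  have ev: "eventually (\<lambda>t. x + axis i t \<in> U) (nhds 0)"
    using ev_axis[OF assms(1,2)] .
  show ?thesis unfolding cpartial_axis
    by (rule deriv_cong_ev) (use ev assms in \<open>auto elim!: eventually_mono\<close>)
qed

lemma SH_subset: "SH U f \<Longrightarrow> V \<subseteq> U \<Longrightarrow> SH V f"
  unfolding SH_def by (auto intro: continuous_on_subset)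

lemma SH_const: "SH U (\<lambda>x. c)"
  unfolding SH_def by auto

lemma SH_coord: "SH U (\<lambda>x::complex^'n. x $ k)"
  unfolding SH_def
proof safe
  show "continuous_on U (\<lambda>x. x $ k)" by (intro continuous_intros)
next
  fix y :: "complex^'n" and i
  have e: "(\<lambda>t. (y + axis i t) $ k) = (\<lambda>t. y $ k + (if k = i then t else 0))"
    by (auto simp: axis_def)
  have "(\<lambda>t::complex. y $ k + (if k = i then t else 0)) field_differentiable at 0"
    by (cases "k = i") (simp_all add: field_differentiable_add field_differentiable_ident)
  then show "(\<lambda>t. ((y + axis i t) $ k)) field_differentiable at 0"
    by (simp only: e)
qed

lemma SH_add: "SH U f \<Longrightarrow> SH U g \<Longrightarrow> SH U (\<lambda>x. f x + g x)"
  unfolding SH_def by (auto intro!: continuous_intros field_differentiable_add)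

lemma SH_mult: "SH U f \<Longrightarrow> SH U g \<Longrightarrow> SH U (\<lambda>x. f x * g x)"
  unfolding SH_def by (auto intro!: continuous_intros field_differentiable_mult)

lemma SH_minus: "SH U f \<Longrightarrow> SH U (\<lambda>x. - f x)"
  using SH_mult[OF SH_const[of U "-1"], of f] by simp

lemma SH_diff: "SH U f \<Longrightarrow> SH U g \<Longrightarrow> SH U (\<lambda>x. f x - g x)"
  using SH_add[OF _ SH_minus, of U f g] by simp

lemma SH_sum: "finite A \<Longrightarrow> (\<And>a. a \<in> A \<Longrightarrow> SH U (f a)) \<Longrightarrow> SH U (\<lambda>x. \<Sum>a\<in>A. f a x)"
  by (induction A rule: finite_induct) (auto intro: SH_const SH_add)

lemma SH_prod: "finite A \<Longrightarrow> (\<And>a. a \<in> A \<Longrightarrow> SH U (f a)) \<Longrightarrow> SH U (\<lambda>x. \<Prod>a\<in>A. f a x)"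
  by (induction A rule: finite_induct) (auto intro: SH_const SH_mult)

lemma SH_power: "SH U f \<Longrightarrow> SH U (\<lambda>x. f x ^ n)"
  by (induction n) (auto intro: SH_const SH_mult)

lemma SH_inverse:
  assumes "SH U f" "\<And>x. x \<in> U \<Longrightarrow> f x \<noteq> 0"
  shows "SH U (\<lambda>x. inverse (f x))"
  using assms unfolding SH_def
  by (auto intro!: continuous_intros field_differentiable_inverse)


lemma cont_axis_on: "continuous_on S (\<lambda>t. x + axis i (t::complex))"
  by (intro continuous_at_imp_continuous_on ballI isCont_axis)

lemma continuous_on_axis [continuous_intros]:
  "continuous_on A g \<Longrightarrow> continuous_on A (\<lambda>x. axis j (g x :: complex))"
  using bounded_linear.continuous_on[OF bounded_linear_axis] by blast

lemma SH_line_holo: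
  assumes "SH U f" "\<And>t. t \<in> S \<Longrightarrow> x + axis i t \<in> U" "open S"
  shows "(\<lambda>t. f (x + axis i t)) holomorphic_on S"
  unfolding holomorphic_on_open[OF assms(3)] using SH_line_deriv[OF assms(1)] assms(2) by blast

lemma SH_line_cont:
  assumes "SH U f" "\<And>t. t \<in> S \<Longrightarrow> x + axis i t \<in> U"
  shows "continuous_on S (\<lambda>t. f (x + axis i t))"
  by (rule continuous_on_compose2[OF _ cont_axis_on[of S x i]]) (use assms in \<open>auto simp: SH_def\<close>)

lemma cball_axis:
  fixes x :: "complex^'n"
  assumes "t \<in> cball 0 r"
  shows "x + axis i t \<in> cball x r"
  using assms by (simp add: dist_norm norm_axis)

lemma cauchy_rep:
  fixes x :: "complex^'n"
  assumes U: "SH U f" and r: "r > 0" "cball x r \<subseteq> U"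
  shows "cpartial i f x = 1 / (2 * of_real pi * \<i>) * contour_integral (circlepath 0 r) (\<lambda>u. f (x + axis i u) / u^2)"
proof -
  let ?g = "\<lambda>t. f (x + axis i t)"
  have in_U: "x + axis i t \<in> U" if "t \<in> cball 0 r" for t
    using cball_axis[OF that, of x i] r by blast
  have c: "continuous_on (cball 0 r) ?g"
    by (rule SH_line_cont[OF U]) (use in_U in auto)
  have h: "?g holomorphic_on ball 0 r"
    by (rule SH_line_holo[OF U]) (use in_U in auto)
  have "(?g has_field_derivative (1 / (2 * of_real pi * \<i>) * contour_integral (circlepath 0 r) (\<lambda>u. ?g u / (u - 0)^2))) (at 0)"
    by (rule Cauchy_derivative_integral_circlepath(2)[OF c h]) (use r in auto)
  moreover have "(?g has_field_derivative cpartial i f x) (at 0)"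
    by (rule SH_diff_at[OF U]) (use r in auto)
  ultimately show ?thesis using DERIV_unique by fastforce
qed

lemma cpartial_continuous:
  fixes U :: "(complex^'n) set"
  assumes "open U" "SH U f"
  shows "continuous_on U (cpartial i f)"
proof (intro continuous_at_imp_continuous_on ballI)
  fix y assume y: "y \<in> U"
  obtain r0 where r0: "r0 > 0" "cball y r0 \<subseteq> U"
    using assms(1) y open_contains_cball by blast
  define r where "r = r0 / 2"
  have r: "r > 0" "cball y (2*r) \<subseteq> U" using r0 by (auto simp: r_def)
  let ?K = "cball y (2*r)"
  have fc: "continuous_on ?K f" using assms(2) r continuous_on_subset unfolding SH_def by blast
  have uc: "uniformly_continuous_on ?K f"
    by (rule compact_uniformly_continuous[OF fc]) simp
  show "isCont (cpartial i f) y"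
    unfolding continuous_at_eps_delta
  proof (intro allI impI)
    fix e :: real assume e: "e > 0"
    obtain d where d: "d > 0" "\<forall>a\<in>?K. \<forall>b\<in>?K. dist b a < d \<longrightarrow> dist (f b) (f a) < e * r / 2"
      using uc e r unfolding uniformly_continuous_on_def by (metis half_gt_zero mult_pos_pos)
    show "\<exists>d>0. \<forall>x'. dist x' y < d \<longrightarrow> dist (cpartial i f x') (cpartial i f y) < e"
    proof (intro exI[of _ "min r d"] conjI allI impI)
      show "min r d > 0" using d r by simp
      fix x assume dx: "dist x y < min r d"
      have sub: "cball x r \<subseteq> ?K"
      proof
        fix z assume "z \<in> cball x r"
        then have "dist x z \<le> r" by simp
        moreover have "dist y z \<le> dist y x + dist x z" by (rule dist_triangle)
        ultimately show "z \<in> ?K" using dx by (simp add: dist_commute)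
      qed
      have cy: "cball y r \<subseteq> ?K" using r by (auto simp: subset_cball)
      let ?A = "\<lambda>u. f (x + axis i u) / u^2" and ?B = "\<lambda>u. f (y + axis i u) / u^2"
      have inK: "z + axis i u \<in> ?K" if "u \<in> sphere 0 r" "z = x \<or> z = y" for u z
        using that sub cy cball_axis[of u r z i] by auto
      have contA: "continuous_on (sphere 0 r) ?A" and contB: "continuous_on (sphere 0 r) ?B"
        using r by (auto intro!: continuous_intros continuous_on_compose2[OF fc cont_axis_on] inK)
      have intA: "?A contour_integrable_on circlepath 0 r" and intB: "?B contour_integrable_on circlepath 0 r"
        using contA contB r by (auto intro!: contour_integrable_continuous_circlepath)
      have eq: "cpartial i f x - cpartial i f y = 1 / (2 * of_real pi * \<i>) * contour_integral (circlepath 0 r) (\<lambda>u. ?A u - ?B u)"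
        using cauchy_rep[OF assms(2) r(1), of x i] cauchy_rep[OF assms(2) r(1), of y i] sub cy r
        by (simp add: contour_integral_diff[OF intA intB] right_diff_distrib)
      have "(\<lambda>u. ?A u - ?B u) contour_integrable_on circlepath 0 r"
        using intA intB by (rule contour_integrable_diff)
      then have hi: "((\<lambda>u. ?A u - ?B u) has_contour_integral contour_integral (circlepath 0 r) (\<lambda>u. ?A u - ?B u)) (circlepath 0 r)"
        by (rule has_contour_integral_integral)
      have bnd: "norm (?A u - ?B u) \<le> (e * r / 2) / r^2" if "norm (u - 0) = r" for u
      proof -
        have u: "u \<in> sphere 0 r" using that by simp
        have "dist (x + axis i u) (y + axis i u) < d" using dx by (simp add: dist_norm)
        then have "dist (f (x + axis i u)) (f (y + axis i u)) < e * r / 2"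
          using d(2) inK[OF u] by (simp add: dist_commute)
        moreover have "?A u - ?B u = (f (x + axis i u) - f (y + axis i u)) / u^2"
          by (simp add: diff_divide_distrib)
        moreover have "cmod (u^2) = r^2" using that by (simp add: norm_power)
        ultimately show ?thesis using r
          by (simp add: dist_norm norm_divide field_simps)
      qed
      have "norm (contour_integral (circlepath 0 r) (\<lambda>u. ?A u - ?B u)) \<le> (e * r / 2) / r^2 * (2 * pi * r)"
        by (rule has_contour_integral_bound_circlepath[OF hi _ r(1) bnd]) (use e r in auto)
      also have "\<dots> = e * pi" using r by (simp add: field_simps power2_eq_square)
      finally have ni: "norm (contour_integral (circlepath 0 r) (\<lambda>u. ?A u - ?B u)) \<le> e * pi" .
      have "dist (cpartial i f x) (cpartial i f y) = norm (contour_integral (circlepath 0 r) (\<lambda>u. ?A u - ?B u)) / (2 * pi)"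
        unfolding dist_norm eq by (simp add: norm_mult norm_divide)
      also have "\<dots> \<le> e * pi / (2 * pi)" using ni by (intro divide_right_mono) auto
      also have "\<dots> < e" using e by simp
      finally show "dist (cpartial i f x) (cpartial i f y) < e" .
    qed
  qed
qed



lemma inv_sq_sphere:
  assumes "u \<in> sphere (0::complex) r" "r > 0"
  shows "1 / u^2 = cnj u ^ 2 / of_real r ^ 4"
proof -
  have u: "cmod u = r" using assms by simp
  have "of_real ((cmod u)\<^sup>2) = u * cnj u" by (rule complex_norm_square)
  then have "u * cnj u = of_real r ^ 2" using u by simp
  moreover have "u \<noteq> 0" using u assms by auto
  moreover have "cnj u \<noteq> 0" using \<open>u \<noteq> 0\<close> by simp
  ultimately show ?thesis
  proof -
    assume uc: "u * cnj u = of_real r ^ 2" and u0: "u \<noteq> 0" and c0: "cnj u \<noteq> 0"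
    have "(of_real r ^ 2) ^ 2 = (u * cnj u) ^ 2" using uc by simp
    then have r4: "of_real r ^ 4 = u^2 * cnj u ^ 2" by (simp add: power_mult_distrib flip: power_mult)
    show ?thesis using u0 c0 by (simp add: r4)
  qed
qed

lemma SH_cpartial:
  fixes U :: "(complex^'n) set"
  assumes U: "open U" "SH U f"
  shows "SH U (cpartial i f)"
  unfolding SH_def
proof (intro conjI ballI allI)
  show "continuous_on U (cpartial i f)" by (rule cpartial_continuous[OF U])
  fix y j assume y: "y \<in> U"
  obtain r0 where r0: "r0 > 0" "cball y r0 \<subseteq> U"
    using U(1) y open_contains_cball by blast
  define r where "r = r0 / 3"
  have r: "r > 0" "cball y (3*r) \<subseteq> U" using r0 by (auto simp: r_def)
  define c0 where "c0 = 1 / (2 * of_real pi * \<i>)"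
  define S where "S = ball (0::complex) r"
  define V where "V = ball (0::complex) (5*r/4)"
  define F where "F = (\<lambda>s. cpartial i f (y + axis j s))"
  define H where "H = (\<lambda>s u. f (y + axis j s + axis i u) * (cnj u ^ 2 / of_real r ^ 4))"
  define G where "G = (\<lambda>s. contour_integral (circlepath 0 r) (H s))"
  have fc: "continuous_on U f" using U unfolding SH_def by blast
  have inU: "y + axis j s + axis i u \<in> U" if "cmod s + cmod u \<le> 5*r/2" for s u
  proof -
    have "norm (axis j s + axis i u) \<le> cmod s + cmod u"
      using norm_triangle_ineq[of "axis j s" "axis i u"] by (simp add: norm_axis)
    then have "norm (axis j s + axis i u) \<le> 3*r" using that r by linarith
    moreover have "dist y (y + w) = norm w" for w :: "complex^'n" by (simp add: dist_norm)
    ultimately have "y + (axis j s + axis i u) \<in> cball y (3*r)"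
      by (simp only: mem_cball)
    then have "y + axis j s + axis i u \<in> cball y (3*r)"
      by (simp only: add.assoc)
    then show ?thesis using r by blast
  qed
  have inUV: "y + axis j s + axis i u \<in> U" if "s \<in> V" "u \<in> V" for s u
    using that inU[of s u] by (simp add: V_def)
  have contH1: "continuous_on (V \<times> V) (\<lambda>(s, u). H s u)"
    unfolding H_def case_prod_unfold
  proof (intro continuous_on_mult continuous_intros)
    show "continuous_on (V \<times> V) (\<lambda>p. f (y + axis j (fst p) + axis i (snd p)))"
      by (rule continuous_on_compose2[OF fc]) (auto intro!: continuous_intros inUV)
  qed (use r in auto)
  have contH2: "continuous_on (V \<times> V) (\<lambda>(u, s). H s u)"
    unfolding H_def case_prod_unfold
  proof (intro continuous_on_mult continuous_intros)
    show "continuous_on (V \<times> V) (\<lambda>p. f (y + axis j (snd p) + axis i (fst p)))"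
      by (rule continuous_on_compose2[OF fc]) (auto intro!: continuous_intros inUV)
  qed (use r in auto)
  have SV: "S \<subseteq> V" and sphV: "sphere 0 r \<subseteq> V" using r by (auto simp: S_def V_def)
  have FG: "F s = c0 * G s" if "s \<in> S" for s
  proof -
    have sub: "cball (y + axis j s) r \<subseteq> U"
    proof
      fix z assume "z \<in> cball (y + axis j s) r"
      then have "dist (y + axis j s) z \<le> r" by simp
      moreover have "dist y z \<le> dist y (y + axis j s) + dist (y + axis j s) z" by (rule dist_triangle)
      moreover have "dist y (y + axis j s) < r" using that by (simp add: S_def dist_norm norm_axis)
      ultimately have "z \<in> cball y (3*r)" using r by simp
      then show "z \<in> U" using r by blast
    qed
    have "F s = c0 * contour_integral (circlepath 0 r) (\<lambda>u. f (y + axis j s + axis i u) / u^2)"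
      unfolding F_def c0_def by (rule cauchy_rep[OF U(2) r(1) sub])
    also have "contour_integral (circlepath 0 r) (\<lambda>u. f (y + axis j s + axis i u) / u^2) = G s"
      unfolding G_def H_def
    proof (rule contour_integral_eq)
      fix u assume "u \<in> path_image (circlepath 0 r)"
      then have "u \<in> sphere 0 r" using r by simp
      then have E: "1 / u^2 = cnj u ^ 2 / of_real r ^ 4" using inv_sq_sphere r by blast
      have "f (y + axis j s + axis i u) / u^2 = f (y + axis j s + axis i u) * (1 / u^2)" by simp
      then show "f (y + axis j s + axis i u) / u^2 = f (y + axis j s + axis i u) * (cnj u ^ 2 / of_real r ^ 4)"
        by (simp only: E)
    qed
    finally show ?thesis .
  qed
  have c0: "c0 \<noteq> 0" by (simp add: c0_def)
  have contF: "continuous_on S F"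
    unfolding F_def
  proof (rule continuous_on_compose2[OF cpartial_continuous[OF U] cont_axis_on])
    show "(\<lambda>s. y + axis j s) ` S \<subseteq> U"
    proof
      fix z assume "z \<in> (\<lambda>s. y + axis j s) ` S"
      then obtain s where s: "s \<in> S" "z = y + axis j s" by blast
      then have "cmod s + cmod 0 \<le> 5*r/2" using r by (simp add: S_def)
      then show "z \<in> U" using inU[of s 0] s by simp
    qed
  qed
  have contG: "continuous_on S G"
  proof -
    have "continuous_on S (\<lambda>s. F s / c0)" using contF c0 by (intro continuous_intros) auto
    then show ?thesis by (rule continuous_on_cong[THEN iffD1, rotated 2]) (use FG c0 in auto)
  qed
  have seg: "contour_integral (linepath p q) F =
             c0 * contour_integral (circlepath 0 r) (\<lambda>u. contour_integral (linepath p q) (\<lambda>s. H s u))"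
    and segc: "continuous_on V (\<lambda>u. contour_integral (linepath p q) (\<lambda>s. H s u))"
    if pq: "closed_segment p q \<subseteq> S" for p q
  proof -
    have "contour_integral (linepath p q) F = contour_integral (linepath p q) (\<lambda>s. c0 * G s)"
      by (rule contour_integral_eq) (use FG pq in auto)
    also have "\<dots> = c0 * contour_integral (linepath p q) G"
      by (rule contour_integral_lmul, rule contour_integrable_continuous_linepath)
         (rule continuous_on_subset[OF contG pq])
    also have "contour_integral (linepath p q) G =
               contour_integral (circlepath 0 r) (\<lambda>u. contour_integral (linepath p q) (\<lambda>s. H s u))"
      unfolding G_def
    proof (rule contour_integral_swap)
      show "continuous_on (path_image (linepath p q) \<times> path_image (circlepath 0 r)) (\<lambda>(y1, y2). H y1 y2)"
        by (rule continuous_on_subset[OF contH1]) (use pq SV sphV r in auto)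
      show "continuous_on {0..1} (\<lambda>t. vector_derivative (circlepath 0 r) (at t))"
        by (simp add: vector_derivative_circlepath) (intro continuous_intros)
      show "valid_path (linepath p q)" by simp
      show "valid_path (circlepath 0 r)" by simp
      show "continuous_on {0..1} (\<lambda>t. vector_derivative (linepath p q) (at t))" by simp
    qed
    finally show "contour_integral (linepath p q) F =
             c0 * contour_integral (circlepath 0 r) (\<lambda>u. contour_integral (linepath p q) (\<lambda>s. H s u))" .
    show "continuous_on V (\<lambda>u. contour_integral (linepath p q) (\<lambda>s. H s u))"
    proof (rule contour_integral_continuous_on_linepath_2D[where F = "\<lambda>u s. H s u"])
      show "open V" by (simp add: V_def)
      show "continuous_on (V \<times> V) (\<lambda>(x, y). H y x)" using contH2 by simp
      show "closed_segment p q \<subseteq> V" using pq SV by blast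
      fix u assume "u \<in> V"
      show "(\<lambda>s. H s u) contour_integrable_on linepath p q"
        by (rule contour_integrable_continuous_linepath, rule continuous_on_subset[OF _ \<open>closed_segment p q \<subseteq> V\<close>])
           (rule continuous_on_compose2[OF contH1, of _ "\<lambda>s. (s, u)", simplified], use \<open>u \<in> V\<close> in \<open>auto intro!: continuous_intros\<close>)
    qed
  qed
  have holH: "(\<lambda>s. H s u) holomorphic_on S" if "u \<in> sphere 0 r" for u
  proof -
    have "(\<lambda>s. f ((y + axis i u) + axis j s)) holomorphic_on S"
      by (rule SH_line_holo[OF U(2)]) (use that inU r in \<open>auto simp: S_def add_ac\<close>)
    then have "(\<lambda>s. f ((y + axis i u) + axis j s) * (cnj u ^ 2 / of_real r ^ 4)) holomorphic_on S"
      by (intro holomorphic_on_mult holomorphic_on_const)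
    moreover have "(\<lambda>s. H s u) = (\<lambda>s. f ((y + axis i u) + axis j s) * (cnj u ^ 2 / of_real r ^ 4))"
      by (simp add: H_def add_ac)
    ultimately show ?thesis by simp
  qed
  have tri: "contour_integral (linepath a b) F + contour_integral (linepath b c) F + contour_integral (linepath c a) F = 0"
    if abc: "convex hull {a, b, c} \<subseteq> S" for a b c
  proof -
    have ss: "closed_segment a b \<subseteq> S" "closed_segment b c \<subseteq> S" "closed_segment c a \<subseteq> S"
      using subset_trans[OF segments_subset_convex_hull(1) abc] subset_trans[OF segments_subset_convex_hull(3) abc]
            subset_trans[OF segments_subset_convex_hull(5) abc] by auto
    let ?A = "\<lambda>p q u. contour_integral (linepath p q) (\<lambda>s. H s u)"
    have int: "?A p q contour_integrable_on circlepath 0 r" if "closed_segment p q \<subseteq> S" for p q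
      by (rule contour_integrable_continuous_circlepath, rule continuous_on_subset[OF segc[OF that]])
         (use sphV r in auto)
    have zero: "?A a b u + ?A b c u + ?A c a u = 0" if u: "u \<in> path_image (circlepath 0 r)" for u
    proof -
      have u': "u \<in> sphere 0 r" using u r by simp
      have hol: "(\<lambda>s. H s u) holomorphic_on convex hull {a, b, c}"
        using holomorphic_on_subset[OF holH[OF u'] abc] .
      have ci: "(\<lambda>s. H s u) contour_integrable_on linepath p q" if "closed_segment p q \<subseteq> S" for p q
        using holomorphic_on_imp_continuous_on[OF holH[OF u']] that
        by (intro contour_integrable_continuous_linepath) (auto intro: continuous_on_subset)
      have "contour_integral (linepath a b +++ linepath b c +++ linepath c a) (\<lambda>s. H s u) = 0"
        by (rule contour_integral_unique[OF Cauchy_theorem_triangle[OF hol]])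
      moreover have "(\<lambda>s. H s u) contour_integrable_on (linepath b c +++ linepath c a)"
        by (rule contour_integrable_joinI[OF ci[OF ss(2)] ci[OF ss(3)]]) auto
      ultimately show ?thesis using ci[OF ss(1)] ci[OF ss(2)] ci[OF ss(3)]
        by (simp add: add.assoc)
    qed
    have "contour_integral (linepath a b) F + contour_integral (linepath b c) F + contour_integral (linepath c a) F
        = c0 * (contour_integral (circlepath 0 r) (?A a b) + contour_integral (circlepath 0 r) (?A b c)
                 + contour_integral (circlepath 0 r) (?A c a))"
      using seg[OF ss(1)] seg[OF ss(2)] seg[OF ss(3)] by (simp add: distrib_left)
    also have "contour_integral (circlepath 0 r) (?A a b) + contour_integral (circlepath 0 r) (?A b c)
                 + contour_integral (circlepath 0 r) (?A c a)
             = contour_integral (circlepath 0 r) (\<lambda>u. ?A a b u + ?A b c u + ?A c a u)"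
      using int[OF ss(1)] int[OF ss(2)] int[OF ss(3)]
      by (simp add: contour_integral_add contour_integrable_add)
    also have "\<dots> = contour_integral (circlepath 0 r) (\<lambda>u. 0)"
      by (rule contour_integral_eq) (use zero in auto)
    finally show ?thesis by simp
  qed
  have "F analytic_on S"
    by (rule Morera_triangle[OF contF]) (use tri in \<open>auto simp: S_def\<close>)
  then have "F field_differentiable (at 0)"
    by (rule analytic_on_imp_differentiable_at) (use r in \<open>simp add: S_def\<close>)
  then show "(\<lambda>t. cpartial i f (y + axis j t)) field_differentiable at 0"
    by (simp add: F_def)
qed


lemma cpartial_mult:
  assumes "SH U f" "SH U g" "x \<in> U"
  shows "cpartial i (\<lambda>x. f x * g x) x = cpartial i f x * g x + f x * cpartial i g x"
proof -
  have "((\<lambda>t. f (x + axis i t) * g (x + axis i t)) has_field_derivative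
          cpartial i f x * g (x + axis i 0) + cpartial i g x * f (x + axis i 0)) (at 0)"
    by (rule DERIV_mult[OF SH_diff_at[OF assms(1,3)] SH_diff_at[OF assms(2,3)]])
  then show ?thesis unfolding cpartial_axis[of i "\<lambda>x. f x * g x"]
    by (simp add: DERIV_imp_deriv cpartial_axis mult.commute)
qed

lemma cpartial_add:
  assumes "SH U f" "SH U g" "x \<in> U"
  shows "cpartial i (\<lambda>x. f x + g x) x = cpartial i f x + cpartial i g x"
proof -
  have "((\<lambda>t. f (x + axis i t) + g (x + axis i t)) has_field_derivative
          cpartial i f x + cpartial i g x) (at 0)"
    by (rule DERIV_add[OF SH_diff_at[OF assms(1,3)] SH_diff_at[OF assms(2,3)]])
  then show ?thesis unfolding cpartial_axis[of i "\<lambda>x. f x + g x"]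
    by (simp add: DERIV_imp_deriv cpartial_axis)
qed

inductive vset :: "(complex^'n) set \<Rightarrow> complex^'n \<Rightarrow> nat \<Rightarrow> (complex^'n \<Rightarrow> complex) \<Rightarrow> bool"
  for U y where
  base: "SH U f \<Longrightarrow> vset U y 0 f"
| mul: "vset U y k g \<Longrightarrow> SH U h \<Longrightarrow> h y = 0 \<Longrightarrow> (\<forall>x\<in>U. f x = g x * h x) \<Longrightarrow> vset U y (Suc k) f"
| add: "vset U y (Suc k) f1 \<Longrightarrow> vset U y (Suc k) f2 \<Longrightarrow> (\<forall>x\<in>U. f x = f1 x + f2 x) \<Longrightarrow> vset U y (Suc k) f"

context
  fixes U :: "(complex^'n) set" and y :: "complex^'n"
  assumes U: "open U"
begin

lemma vset_SH: "vset U y k f \<Longrightarrow> SH U f"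
proof (induction rule: vset.induct)
  case (mul k g h f) then show ?case using SH_cong[OF SH_mult[of U g h] U] by auto
next
  case (add k f1 f2 f) then show ?case using SH_cong[OF SH_add[of U f1 f2] U] by auto
qed

lemma vset_zero: "vset U y n f \<Longrightarrow> n = Suc k \<Longrightarrow> y \<in> U \<Longrightarrow> f y = 0"
proof (induction arbitrary: k rule: vset.induct)
  case (mul k g h f) then show ?case by auto
next
  case (add k f1 f2 f) then show ?case by auto
qed auto

lemma vset_multSH: "vset U y k g \<Longrightarrow> SH U c \<Longrightarrow> (\<forall>x\<in>U. f x = g x * c x) \<Longrightarrow> vset U y k f"
proof (induction arbitrary: f rule: vset.induct)
  case (base g)
  then show ?case using SH_cong[OF SH_mult[of U g c] U] by (auto intro: vset.base)
next
  case (mul k g h f)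
  have "vset U y k (\<lambda>x. g x * c x)" by (rule mul.IH) (use mul.prems in auto)
  then show ?case by (rule vset.mul[OF _ mul.hyps(2,3)]) (use mul.prems mul.hyps(4) in auto)
next
  case (add k f1 f2 f)
  have "vset U y (Suc k) (\<lambda>x. f1 x * c x)" by (rule add.IH(1)) (use add.prems in auto)
  moreover have "vset U y (Suc k) (\<lambda>x. f2 x * c x)" by (rule add.IH(2)) (use add.prems in auto)
  ultimately show ?case by (rule vset.add) (use add.prems add.hyps(3) in \<open>auto simp: distrib_right\<close>)
qed

lemma vset_cong: "vset U y k g \<Longrightarrow> (\<And>x. x \<in> U \<Longrightarrow> f x = g x) \<Longrightarrow> vset U y k f"
  using vset_multSH[of k g "\<lambda>x. 1" f] SH_const by auto

lemma vset_add_any: "vset U y k f1 \<Longrightarrow> vset U y k f2 \<Longrightarrow> (\<forall>x\<in>U. f x = f1 x + f2 x) \<Longrightarrow> vset U y k f"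
proof (cases k)
  case 0
  assume "vset U y k f1" "vset U y k f2" "\<forall>x\<in>U. f x = f1 x + f2 x"
  then show ?thesis using 0 SH_cong[OF SH_add[OF vset_SH vset_SH] U] by (auto intro: vset.base)
next
  case (Suc k')
  assume "vset U y k f1" "vset U y k f2" "\<forall>x\<in>U. f x = f1 x + f2 x"
  then show ?thesis using Suc by (auto intro: vset.add)
qed

lemma vset_mono_Suc: "vset U y n f \<Longrightarrow> n = Suc k \<Longrightarrow> vset U y k f"
proof (induction arbitrary: k rule: vset.induct)
  case (base f) then show ?case by simp
next
  case (mul k' g h f)
  have kk: "k' = k" using mul.prems by simp
  show ?case
  proof (cases k')
    case 0
    have "SH U f" by (rule vset_SH[OF vset.mul[OF mul.hyps]])
    then show ?thesis using 0 kk by (simp add: vset.base)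
  next
    case (Suc k'')
    have "vset U y k'' g" by (rule mul.IH) (use Suc in simp)
    then have "vset U y (Suc k'') f" by (rule vset.mul[OF _ mul.hyps(2-4)])
    then show ?thesis using Suc kk by simp
  qed
next
  case (add k' f1 f2 f)
  have "vset U y k f1" by (rule add.IH(1)) (use add.prems in simp)
  moreover have "vset U y k f2" by (rule add.IH(2)) (use add.prems in simp)
  ultimately show ?case by (rule vset_add_any) (use add.hyps(3) in simp)
qed

lemma vset_deriv: "vset U y (Suc k) f \<Longrightarrow> vset U y k (cpartial i f)"
proof (induction k arbitrary: f)
  case 0
  then have "SH U f" by (rule vset_SH)
  then show ?case by (intro vset.base SH_cpartial U)
next
  case (Suc k)
  have "vset U y n f \<Longrightarrow> n = Suc (Suc k) \<Longrightarrow> vset U y (Suc k) (cpartial i f)" for n f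
  proof (induction rule: vset.induct)
    case (base f) then show ?case by simp
  next
    case (mul k' g h f)
    then have k': "k' = Suc k" by simp
    have Sg: "SH U g" using mul.hyps(1) by (rule vset_SH)
    have eq: "cpartial i f x = cpartial i g x * h x + g x * cpartial i h x" if "x \<in> U" for x
    proof -
      have "cpartial i f x = cpartial i (\<lambda>x. g x * h x) x"
        by (rule cpartial_cong[OF U that]) (use mul.hyps(4) in auto)
      also have "\<dots> = cpartial i g x * h x + g x * cpartial i h x"
        by (rule cpartial_mult[OF Sg mul.hyps(2) that])
      finally show ?thesis .
    qed
    have t1: "vset U y (Suc k) (\<lambda>x. cpartial i g x * h x)"
      by (rule vset.mul[OF Suc.IH[OF mul.hyps(1)[unfolded k']] mul.hyps(2,3)]) auto
    have t2: "vset U y (Suc k) (\<lambda>x. g x * cpartial i h x)"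
      by (rule vset_multSH[OF mul.hyps(1)[unfolded k'] SH_cpartial[OF U mul.hyps(2)]]) auto
    show ?case by (rule vset_add_any[OF t1 t2]) (use eq in auto)
  next
    case (add k' f1 f2 f)
    have S1: "SH U f1" using add.hyps(1) by (rule vset_SH)
    have S2: "SH U f2" using add.hyps(2) by (rule vset_SH)
    have eq: "cpartial i f x = cpartial i f1 x + cpartial i f2 x" if "x \<in> U" for x
    proof -
      have "cpartial i f x = cpartial i (\<lambda>x. f1 x + f2 x) x"
        by (rule cpartial_cong[OF U that]) (use add.hyps(3) in auto)
      also have "\<dots> = cpartial i f1 x + cpartial i f2 x"
        by (rule cpartial_add[OF S1 S2 that])
      finally show ?thesis .
    qed
    have "vset U y (Suc k) (cpartial i f1)" by (rule add.IH(1)) (use add.prems in simp)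
    moreover have "vset U y (Suc k) (cpartial i f2)" by (rule add.IH(2)) (use add.prems in simp)
    ultimately show ?case by (rule vset_add_any) (use eq in auto)
  qed
  then show ?case using Suc.prems by blast
qed

lemma vset_cpartials: "vset U y n f \<Longrightarrow> length is \<le> n \<Longrightarrow> vset U y (n - length is) (cpartials is f)"
proof (induction "is")
  case Nil then show ?case by (simp add: cpartials_def)
next
  case (Cons i "is")
  then have v: "vset U y (n - length is) (cpartials is f)" by simp
  have "n - length is = Suc (n - length (i # is))" using Cons.prems by simp
  then have "vset U y (n - length (i # is)) (cpartial i (cpartials is f))"
    using vset_deriv v by metis
  then show ?case by (simp add: cpartials_def)
qed

lemma vset_cpartials_zero:
  assumes "vset U y n f" "length is < n" "y \<in> U"
  shows "cpartials is f y = 0"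
proof -
  have v: "vset U y (n - length is) (cpartials is f)" using vset_cpartials assms by simp
  have "n - length is = Suc (n - length is - 1)" using assms by simp
  then show ?thesis using vset_zero[OF v _ assms(3)] by blast
qed

lemma vset_prod: "vset U y b g \<Longrightarrow> vset U y a f \<Longrightarrow> vset U y (a + b) (\<lambda>x. f x * g x)"
proof (induction rule: vset.induct)
  case (base g)
  then show ?case using vset_multSH[of a f g] by auto
next
  case (mul k g h g')
  have "vset U y (a + k) (\<lambda>x. f x * g x)" using mul.IH mul.prems by blast
  then have "vset U y (Suc (a + k)) (\<lambda>x. f x * g' x)"
    by (rule vset.mul[OF _ mul.hyps(2,3)]) (use mul.hyps(4) in simp)
  then show ?case by simp
next
  case (add k f1 f2 g)
  have "vset U y (Suc (a + k)) (\<lambda>x. f x * f1 x)" "vset U y (Suc (a + k)) (\<lambda>x. f x * f2 x)"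
    using add.IH add.prems by auto
  then have "vset U y (Suc (a + k)) (\<lambda>x. f x * g x)"
    by (rule vset.add) (use add.hyps(3) in \<open>simp add: distrib_left\<close>)
  then show ?case by simp
qed

lemma vset_one:
  assumes "SH U h" "h y = 0"
  shows "vset U y 1 h"
proof -
  have "vset U y 0 (\<lambda>x. 1)" by (rule vset.base[OF SH_const])
  then have "vset U y (Suc 0) h" by (rule vset.mul[OF _ assms]) simp
  then show ?thesis by simp
qed

lemma vset_power: "SH U h \<Longrightarrow> h y = 0 \<Longrightarrow> vset U y n (\<lambda>x. h x ^ n)"
proof (induction n)
  case 0 then show ?case using vset.base[OF SH_const[of U 1]] by simp
next
  case (Suc n)
  have "vset U y (n + 1) (\<lambda>x. h x ^ n * h x)"
    by (rule vset_prod[OF vset_one[OF Suc.prems] Suc.IH[OF Suc.prems]])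
  then have "vset U y (Suc n) (\<lambda>x. h x ^ n * h x)" by simp
  then show ?case by (rule vset_cong) (simp add: mult.commute)
qed

end


definition restr :: "'n set \<Rightarrow> complex^'n \<Rightarrow> complex^'n" where
  "restr S h = (\<chi> j. if j \<in> S then h $ j else 0)"

lemma SH_holo:
  fixes U :: "(complex^'n) set"
  assumes U: "open U" "SH U f"
  shows "holo_on f U"
  unfolding holo_on_def
proof
  fix x assume x: "x \<in> U"
  define P where "P = (\<lambda>i. cpartial i f)"
  define L where "L = (\<lambda>v::complex^'n. \<Sum>i\<in>UNIV. v $ i * P i x)"
  have lin: "L (c *s v) = c * L v" for c v
    by (simp add: L_def sum_distrib_left mult.assoc)
  have bl: "bounded_linear L"
    unfolding L_def
    by (intro bounded_linear_sum bounded_linear_compose[OF bounded_linear_mult_left bounded_linear_vec_nth])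
  have contP: "isCont (P i) x" for i
  proof -
    have "continuous_on U (P i)" unfolding P_def using SH_cpartial[OF U] SH_def by blast
    then show ?thesis using x U(1) continuous_on_eq_continuous_at by blast
  qed
  have "(f has_derivative L) (at x)"
    unfolding has_derivative_at_alt
  proof (intro conjI allI impI bl)
    fix e :: real assume e: "e > 0"
    define N where "N = real CARD('n)"
    have N: "N > 0" by (simp add: N_def)
    define e' where "e' = e / N"
    have e': "e' > 0" using e N by (simp add: e'_def)
    have "\<forall>i. \<exists>d>0. \<forall>w. dist w x < d \<longrightarrow> dist (P i w) (P i x) < e'"
      using contP e' unfolding continuous_at_eps_delta by blast
    then obtain D where D: "\<And>i. D i > 0" "\<And>i w. dist w x < D i \<Longrightarrow> dist (P i w) (P i x) < e'"
      by metis
    obtain d0 where d0: "d0 > 0" "ball x d0 \<subseteq> U" using U(1) x openE by blast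
    define d where "d = min d0 (Min (range D))"
    have dpos: "d > 0" using d0 D by (simp add: d_def)
    have dD: "d \<le> D i" for i by (simp add: d_def min.coboundedI2)
    have inU: "w \<in> U" if "dist w x < d" for w
      using that d0 by (auto simp: d_def dist_commute)
    show "\<exists>d>0. \<forall>y. norm (y - x) < d \<longrightarrow> norm (f y - f x - L (y - x)) \<le> e * norm (y - x)"
    proof (intro exI[of _ d] conjI allI impI dpos)
      fix y assume ny: "norm (y - x) < d"
      define h where "h = y - x"
      have nh: "norm h < d" using ny by (simp add: h_def)
      have restr_le: "norm (restr S h + axis i t) \<le> norm h" if "i \<notin> S" "cmod t \<le> cmod (h $ i)" for S i t
        by (rule norm_le_componentwise_cart) (use that in \<open>auto simp: restr_def axis_def\<close>)
      have claim: "norm (f (x + restr S h) - f x - (\<Sum>i\<in>S. h $ i * P i x)) \<le> e' * (\<Sum>i\<in>S. cmod (h $ i))"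
        for S
      proof (induction S rule: finite_induct[OF finite])
        case 1
        have "restr {} h = 0" by (simp add: restr_def vec_eq_iff)
        then show ?case by simp
      next
        case (2 i S)
        let ?w = "x + restr S h"
        define g where "g = (\<lambda>t. f (?w + axis i t) - t * P i x)"
        have inseg: "?w + axis i t \<in> U" "dist (?w + axis i t) x < d" if "t \<in> closed_segment 0 (h $ i)" for t
        proof -
          have "cmod t \<le> cmod (h $ i)" using segment_bound1[OF that] by simp
          then have "norm (restr S h + axis i t) \<le> norm h" using restr_le 2 by blast
          then show "dist (?w + axis i t) x < d" using nh by (simp add: dist_norm add.assoc)
          then show "?w + axis i t \<in> U" by (rule inU)
        qed
        have gd: "(g has_field_derivative (P i (?w + axis i t) - P i x)) (at t within closed_segment 0 (h $ i))"
          if "t \<in> closed_segment 0 (h $ i)" for t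
        proof -
          have d1: "((\<lambda>t. f (?w + axis i t)) has_field_derivative P i (?w + axis i t)) (at t)"
            unfolding P_def by (rule SH_line_deriv[OF U(2) inseg(1)[OF that]])
          have d2: "((\<lambda>t. t * P i x) has_field_derivative P i x) (at t)"
            using DERIV_mult[OF DERIV_ident DERIV_const, of "P i x" t] by simp
          show ?thesis unfolding g_def
            by (rule has_field_derivative_at_within[OF DERIV_diff[OF d1 d2]])
        qed
        have gb: "norm (P i (?w + axis i t) - P i x) \<le> e'" if "t \<in> closed_segment 0 (h $ i)" for t
          using D(2)[of "?w + axis i t" i] inseg(2)[OF that] dD[of i] by (simp add: dist_norm)
        have "norm (g (h $ i) - g 0) \<le> e' * norm (h $ i - 0)"
          by (rule field_differentiable_bound[OF convex_closed_segment gd gb]) auto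
        moreover have "x + restr (insert i S) h = ?w + axis i (h $ i)"
          using 2 by (simp add: restr_def axis_def vec_eq_iff)
        ultimately have A: "norm (f (x + restr (insert i S) h) - f ?w - h $ i * P i x) \<le> e' * cmod (h $ i)"
          by (simp add: g_def algebra_simps)
        have "f (x + restr (insert i S) h) - f x - (\<Sum>j\<in>insert i S. h $ j * P j x)
              = (f (x + restr (insert i S) h) - f ?w - h $ i * P i x) + (f ?w - f x - (\<Sum>j\<in>S. h $ j * P j x))"
          using 2 by simp
        also have "norm \<dots> \<le> e' * cmod (h $ i) + e' * (\<Sum>j\<in>S. cmod (h $ j))"
          by (rule order_trans[OF norm_triangle_ineq add_mono[OF A 2(3)]])
        also have "\<dots> = e' * (\<Sum>j\<in>insert i S. cmod (h $ j))"
          using 2 by (simp add: distrib_left)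
        finally show ?case .
      qed
      have rU: "restr UNIV h = h" by (simp add: restr_def vec_eq_iff)
      have "(\<Sum>i\<in>UNIV. cmod (h $ i)) \<le> (\<Sum>i\<in>(UNIV::'n set). norm h)"
        by (rule sum_mono) (rule Finite_Cartesian_Product.norm_nth_le)
      also have "\<dots> = N * norm h" by (simp add: N_def)
      finally have sb: "(\<Sum>i\<in>UNIV. cmod (h $ i)) \<le> N * norm h" .
      have "norm (f y - f x - L (y - x)) \<le> e' * (\<Sum>i\<in>UNIV. cmod (h $ i))"
        using claim[of UNIV] rU by (simp add: h_def L_def)
      also have "\<dots> \<le> e' * (N * norm h)" using sb e' by (simp add: mult_left_mono)
      also have "\<dots> = e * norm (y - x)" using N by (simp add: e'_def h_def)
      finally show "norm (f y - f x - L (y - x)) \<le> e * norm (y - x)" .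
    qed
  qed
  then show "\<exists>L. (f has_derivative L) (at x) \<and> (\<forall>c v. L (c *s v) = c * L v)"
    using lin by blast
qed


definition Qf :: "(nat \<Rightarrow> complex) \<Rightarrow> (nat \<Rightarrow> complex^'n) \<Rightarrow> nat \<Rightarrow> complex" where
  "Qf a w m = (\<Sum>i<m. \<Sum>j<m. a i * cnj (a j) * DA_kernel (w j) (w i))"

lemma DA_spaceD:
  assumes "f \<in> DA_space"
  obtains C where "\<And>m w a. (\<forall>i<m. w i \<in> unit_ball) \<Longrightarrow>
     (cmod (\<Sum>i<m. cnj (a i) * f (w i)))\<^sup>2 \<le> C * Re (Qf a w m)"
  using assms unfolding DA_space_def Qf_def by blast

lemma DA_spaceI:
  assumes "\<And>m w a. (\<forall>i<m. w i \<in> unit_ball) \<Longrightarrow>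
     (cmod (\<Sum>i<m. cnj (a i) * f (w i)))\<^sup>2 \<le> C * Re (Qf a w m)"
  shows "f \<in> DA_space"
  using assms unfolding DA_space_def Qf_def by blast

lemma cinner_abs_lt:
  fixes z w :: "complex^'n"
  assumes "z \<in> unit_ball" "w \<in> unit_ball"
  shows "cmod (cinner z w) < 1"
proof -
  have "cmod (cinner z w) \<le> (\<Sum>i\<in>UNIV. cmod (z $ i * cnj (w $ i)))"
    unfolding cinner_def by (rule norm_sum)
  also have "\<dots> = (\<Sum>i\<in>UNIV. \<bar>cmod (z $ i)\<bar> * \<bar>cmod (w $ i)\<bar>)"
    by (simp add: norm_mult)
  also have "\<dots> \<le> L2_set (\<lambda>i. cmod (z $ i)) UNIV * L2_set (\<lambda>i. cmod (w $ i)) UNIV"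
    by (rule L2_set_mult_ineq)
  also have "\<dots> = norm z * norm w" by (simp add: norm_vec_def)
  also have "\<dots> \<le> norm z" using assms by (simp add: mult_left_le)
  also have "\<dots> < 1" using assms by simp
  finally show ?thesis .
qed

lemma kernel_id:
  assumes "z \<in> unit_ball" "w \<in> unit_ball"
  shows "DA_kernel z w = 1 + cinner z w * DA_kernel z w"
proof -
  have "cinner z w \<noteq> 1" using cinner_abs_lt[OF assms] by auto
  then show ?thesis unfolding DA_kernel_def by (simp add: field_simps)
qed

lemma schur_step:
  fixes w :: "nat \<Rightarrow> complex^'n"
  shows "(\<Sum>i<m. \<Sum>j<m. a i * cnj (a j) * (cinner (w j) (w i) * M j i)) =
         (\<Sum>k\<in>UNIV. \<Sum>i<m. \<Sum>j<m. (a i * cnj (w i $ k)) * cnj (a j * cnj (w j $ k)) * M j i)"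
proof -
  have inner: "(\<Sum>k\<in>UNIV. (a i * cnj (w i $ k)) * cnj (a j * cnj (w j $ k)) * M j i)
       = a i * cnj (a j) * (cinner (w j) (w i) * M j i)" for i j
    unfolding cinner_def sum_distrib_left sum_distrib_right by (rule sum.cong) (simp_all add: mult_ac)
  have "(\<Sum>k\<in>UNIV. \<Sum>i<m. \<Sum>j<m. (a i * cnj (w i $ k)) * cnj (a j * cnj (w j $ k)) * M j i)
      = (\<Sum>i<m. \<Sum>k\<in>UNIV. \<Sum>j<m. (a i * cnj (w i $ k)) * cnj (a j * cnj (w j $ k)) * M j i)"
    by (rule sum.swap)
  also have "\<dots> = (\<Sum>i<m. \<Sum>j<m. \<Sum>k\<in>UNIV. (a i * cnj (w i $ k)) * cnj (a j * cnj (w j $ k)) * M j i)"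
    by (intro sum.cong refl sum.swap)
  also have "\<dots> = (\<Sum>i<m. \<Sum>j<m. a i * cnj (a j) * (cinner (w j) (w i) * M j i))"
    by (intro sum.cong refl) (rule inner)
  finally show ?thesis by simp
qed

lemma sq_sum_nonneg: "(\<Sum>i<m. \<Sum>j<m. a i * cnj (a j)) = of_real ((cmod (\<Sum>i<m. a i))\<^sup>2)"
proof -
  have "(\<Sum>i<m. \<Sum>j<m. a i * cnj (a j)) = (\<Sum>i<m. a i) * cnj (\<Sum>j<m. a j)"
    by (simp add: sum_product cnj_sum)
  also have "\<dots> = of_real ((cmod (\<Sum>i<m. a i))\<^sup>2)" by (rule complex_norm_square[symmetric])
  finally show ?thesis .
qed

lemma psd_power:
  fixes w :: "nat \<Rightarrow> complex^'n"
  shows "Re (\<Sum>i<m. \<Sum>j<m. a i * cnj (a j) * cinner (w j) (w i) ^ n) \<ge> 0"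
proof (induction n arbitrary: a)
  case 0
  then show ?case using sq_sum_nonneg[of a m] by simp
next
  case (Suc n)
  have "(\<Sum>i<m. \<Sum>j<m. a i * cnj (a j) * cinner (w j) (w i) ^ Suc n)
      = (\<Sum>i<m. \<Sum>j<m. a i * cnj (a j) * (cinner (w j) (w i) * cinner (w j) (w i) ^ n))"
    by simp
  also have "\<dots> = (\<Sum>k\<in>UNIV. \<Sum>i<m. \<Sum>j<m. (a i * cnj (w i $ k)) * cnj (a j * cnj (w j $ k)) * cinner (w j) (w i) ^ n)"
    by (rule schur_step)
  finally have eq: "(\<Sum>i<m. \<Sum>j<m. a i * cnj (a j) * cinner (w j) (w i) ^ Suc n) = \<dots>" .
  have "Re (\<Sum>k\<in>UNIV. \<Sum>i<m. \<Sum>j<m. (a i * cnj (w i $ k)) * cnj (a j * cnj (w j $ k)) * cinner (w j) (w i) ^ n)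
     = (\<Sum>k\<in>UNIV. Re (\<Sum>i<m. \<Sum>j<m. (a i * cnj (w i $ k)) * cnj (a j * cnj (w j $ k)) * cinner (w j) (w i) ^ n))"
    by (rule Re_sum)
  also have "\<dots> \<ge> 0"
    by (intro sum_nonneg) (rule Suc.IH)
  finally show ?case unfolding eq .
qed

lemma Qf_psd:
  fixes w :: "nat \<Rightarrow> complex^'n"
  assumes "\<forall>i<m. w i \<in> unit_ball"
  shows "Re (Qf a w m) \<ge> 0"
proof -
  have s: "(\<lambda>n. a i * cnj (a j) * cinner (w j) (w i) ^ n) sums (a i * cnj (a j) * DA_kernel (w j) (w i))"
    if "i < m" "j < m" for i j
  proof -
    have "cmod (cinner (w j) (w i)) < 1" using assms that by (intro cinner_abs_lt) auto
    then have "(\<lambda>n. cinner (w j) (w i) ^ n) sums (1 / (1 - cinner (w j) (w i)))"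
      by (rule geometric_sums)
    then show ?thesis unfolding DA_kernel_def by (rule sums_mult)
  qed
  have "(\<lambda>n. \<Sum>i<m. \<Sum>j<m. a i * cnj (a j) * cinner (w j) (w i) ^ n) sums Qf a w m"
    unfolding Qf_def by (intro sums_sum) (use s in auto)
  then have "(\<lambda>n. Re (\<Sum>i<m. \<Sum>j<m. a i * cnj (a j) * cinner (w j) (w i) ^ n)) sums Re (Qf a w m)"
    by (rule sums_Re)
  define g where "g = (\<lambda>n. Re (\<Sum>i<m. \<Sum>j<m. a i * cnj (a j) * cinner (w j) (w i) ^ n))"
  have S: "g sums Re (Qf a w m)" unfolding g_def by fact
  have g0: "0 \<le> g n" for n unfolding g_def by (rule psd_power)
  have "0 \<le> suminf g" by (rule suminf_nonneg[OF sums_summable[OF S] g0])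
  then show ?thesis using sums_unique[OF S] by simp
qed

lemma Qf_decomp:
  fixes w :: "nat \<Rightarrow> complex^'n"
  assumes "\<forall>i<m. w i \<in> unit_ball"
  shows "Qf a w m = of_real ((cmod (\<Sum>i<m. a i))\<^sup>2) + (\<Sum>k\<in>UNIV. Qf (\<lambda>i. a i * cnj (w i $ k)) w m)"
proof -
  have "Qf a w m = (\<Sum>i<m. \<Sum>j<m. a i * cnj (a j) * (1 + cinner (w j) (w i) * DA_kernel (w j) (w i)))"
    unfolding Qf_def using assms by (intro sum.cong refl) (simp add: kernel_id[symmetric])
  also have "\<dots> = (\<Sum>i<m. \<Sum>j<m. a i * cnj (a j)) +
                  (\<Sum>i<m. \<Sum>j<m. a i * cnj (a j) * (cinner (w j) (w i) * DA_kernel (w j) (w i)))"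
    by (simp add: distrib_left sum.distrib)
  also have "(\<Sum>i<m. \<Sum>j<m. a i * cnj (a j) * (cinner (w j) (w i) * DA_kernel (w j) (w i)))
       = (\<Sum>k\<in>UNIV. Qf (\<lambda>i. a i * cnj (w i $ k)) w m)"
    unfolding Qf_def by (rule schur_step)
  finally show ?thesis by (simp add: sq_sum_nonneg)
qed

lemma Qf_ge_sq:
  fixes w :: "nat \<Rightarrow> complex^'n"
  assumes "\<forall>i<m. w i \<in> unit_ball"
  shows "(cmod (\<Sum>i<m. a i))\<^sup>2 \<le> Re (Qf a w m)"
    and "Re (Qf (\<lambda>i. a i * cnj (w i $ k)) w m) \<le> Re (Qf a w m)"
proof -
  have nn: "\<And>k. Re (Qf (\<lambda>i. a i * cnj (w i $ k)) w m) \<ge> 0" using Qf_psd[OF assms] by blast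
  have eq: "Re (Qf a w m) = (cmod (\<Sum>i<m. a i))\<^sup>2 + (\<Sum>k\<in>UNIV. Re (Qf (\<lambda>i. a i * cnj (w i $ k)) w m))"
    using Qf_decomp[OF assms, of a] by (simp add: Re_sum)
  show "(cmod (\<Sum>i<m. a i))\<^sup>2 \<le> Re (Qf a w m)" using eq nn by (simp add: sum_nonneg)
  have "Re (Qf (\<lambda>i. a i * cnj (w i $ k)) w m) \<le> (\<Sum>k\<in>UNIV. Re (Qf (\<lambda>i. a i * cnj (w i $ k)) w m))"
    by (rule member_le_sum) (use nn in auto)
  then show "Re (Qf (\<lambda>i. a i * cnj (w i $ k)) w m) \<le> Re (Qf a w m)"
    unfolding eq by (intro add_increasing) auto
qed

lemma one_DA: "(\<lambda>x::complex^'n. 1) \<in> DA_space"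
proof (rule DA_spaceI[where C=1])
  fix m :: nat and w :: "nat \<Rightarrow> complex^'n" and a :: "nat \<Rightarrow> complex"
  assume w: "\<forall>i<m. w i \<in> unit_ball"
  have "(cmod (\<Sum>i<m. cnj (a i) * 1))\<^sup>2 = (cmod (\<Sum>i<m. a i))\<^sup>2"
    by (simp flip: cnj_sum)
  also have "\<dots> \<le> Re (Qf a w m)" by (rule Qf_ge_sq(1)[OF w])
  finally show "(cmod (\<Sum>i<m. cnj (a i) * 1))\<^sup>2 \<le> 1 * Re (Qf a w m)" by simp
qed

lemma sq_add_le: "((x::real) + y)\<^sup>2 \<le> 2 * x\<^sup>2 + 2 * y\<^sup>2"
proof -
  have "0 \<le> (x - y)\<^sup>2" by simp
  then show ?thesis unfolding power2_diff power2_sum by linarith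
qed

lemma DA_add:
  fixes f :: "complex^'n \<Rightarrow> complex"
  assumes "f \<in> DA_space" "g \<in> DA_space"
  shows "(\<lambda>x. f x + g x) \<in> DA_space"
proof -
  obtain C1 where C1: "\<And>m w a. (\<forall>i<m. w i \<in> unit_ball) \<Longrightarrow>
     (cmod (\<Sum>i<m. cnj (a i) * f (w i)))\<^sup>2 \<le> C1 * Re (Qf a w m)" using DA_spaceD[OF assms(1)] by blast
  obtain C2 where C2: "\<And>m w a. (\<forall>i<m. w i \<in> unit_ball) \<Longrightarrow>
     (cmod (\<Sum>i<m. cnj (a i) * g (w i)))\<^sup>2 \<le> C2 * Re (Qf a w m)" using DA_spaceD[OF assms(2)] by blast
  show ?thesis
  proof (rule DA_spaceI[where C="2 * C1 + 2 * C2"])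
    fix m :: nat and w :: "nat \<Rightarrow> complex^'n" and a :: "nat \<Rightarrow> complex"
    assume w: "\<forall>i<m. w i \<in> unit_ball"
    let ?u = "\<Sum>i<m. cnj (a i) * f (w i)" and ?v = "\<Sum>i<m. cnj (a i) * g (w i)"
    have e: "(\<Sum>i<m. cnj (a i) * (f (w i) + g (w i))) = ?u + ?v"
      by (simp add: distrib_left sum.distrib)
    have "(cmod (?u + ?v))\<^sup>2 \<le> (cmod ?u + cmod ?v)\<^sup>2"
      by (rule power_mono[OF norm_triangle_ineq]) simp
    also have "\<dots> \<le> 2 * (cmod ?u)\<^sup>2 + 2 * (cmod ?v)\<^sup>2"
      by (rule sq_add_le)
    also have "\<dots> \<le> 2 * (C1 * Re (Qf a w m)) + 2 * (C2 * Re (Qf a w m))"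
      using C1[OF w, of a] C2[OF w, of a] by simp
    finally show "(cmod (\<Sum>i<m. cnj (a i) * (f (w i) + g (w i))))\<^sup>2 \<le> (2 * C1 + 2 * C2) * Re (Qf a w m)"
      unfolding e by (simp add: algebra_simps)
  qed
qed

lemma DA_scale:
  fixes f :: "complex^'n \<Rightarrow> complex"
  assumes "f \<in> DA_space"
  shows "(\<lambda>x. c * f x) \<in> DA_space"
proof -
  obtain C1 where C1: "\<And>m w a. (\<forall>i<m. w i \<in> unit_ball) \<Longrightarrow>
     (cmod (\<Sum>i<m. cnj (a i) * f (w i)))\<^sup>2 \<le> C1 * Re (Qf a w m)" using DA_spaceD[OF assms(1)] by blast
  show ?thesis
  proof (rule DA_spaceI[where C="(cmod c)\<^sup>2 * C1"])
    fix m :: nat and w :: "nat \<Rightarrow> complex^'n" and a :: "nat \<Rightarrow> complex"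
    assume w: "\<forall>i<m. w i \<in> unit_ball"
    have e: "(\<Sum>i<m. cnj (a i) * (c * f (w i))) = c * (\<Sum>i<m. cnj (a i) * f (w i))"
      by (simp add: sum_distrib_left mult_ac)
    have "(cmod (c * (\<Sum>i<m. cnj (a i) * f (w i))))\<^sup>2 = (cmod c)\<^sup>2 * (cmod (\<Sum>i<m. cnj (a i) * f (w i)))\<^sup>2"
      by (simp add: norm_mult power_mult_distrib)
    also have "\<dots> \<le> (cmod c)\<^sup>2 * (C1 * Re (Qf a w m))"
      by (rule mult_left_mono[OF C1[OF w]]) simp
    finally show "(cmod (\<Sum>i<m. cnj (a i) * (c * f (w i))))\<^sup>2 \<le> (cmod c)\<^sup>2 * C1 * Re (Qf a w m)"
      unfolding e by (simp add: mult.assoc)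
  qed
qed

lemma DA_coord:
  fixes f :: "complex^'n \<Rightarrow> complex"
  assumes "f \<in> DA_space"
  shows "(\<lambda>x. x $ k * f x) \<in> DA_space"
proof -
  obtain C1 where C1: "\<And>m w a. (\<forall>i<m. w i \<in> unit_ball) \<Longrightarrow>
     (cmod (\<Sum>i<m. cnj (a i) * f (w i)))\<^sup>2 \<le> C1 * Re (Qf a w m)" using DA_spaceD[OF assms(1)] by blast
  show ?thesis
  proof (rule DA_spaceI[where C="max C1 0"])
    fix m :: nat and w :: "nat \<Rightarrow> complex^'n" and a :: "nat \<Rightarrow> complex"
    assume w: "\<forall>i<m. w i \<in> unit_ball"
    let ?b = "\<lambda>i. a i * cnj (w i $ k)"
    have e: "(\<Sum>i<m. cnj (a i) * (w i $ k * f (w i))) = (\<Sum>i<m. cnj (?b i) * f (w i))"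
      by (simp add: mult_ac)
    have nb: "0 \<le> Re (Qf ?b w m)" by (rule Qf_psd[OF w])
    have "(cmod (\<Sum>i<m. cnj (?b i) * f (w i)))\<^sup>2 \<le> C1 * Re (Qf ?b w m)" by (rule C1[OF w])
    also have "\<dots> \<le> max C1 0 * Re (Qf ?b w m)" by (rule mult_right_mono[OF _ nb]) simp
    also have "\<dots> \<le> max C1 0 * Re (Qf a w m)" by (rule mult_left_mono[OF Qf_ge_sq(2)[OF w]]) simp
    finally show "(cmod (\<Sum>i<m. cnj (a i) * (w i $ k * f (w i))))\<^sup>2 \<le> max C1 0 * Re (Qf a w m)"
      unfolding e .
  qed
qed

lemma mult_DA_sub: "\<phi> \<in> mult_DA \<Longrightarrow> \<phi> \<in> DA_space"
  using one_DA unfolding mult_DA_def by fastforce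

lemma mult_DA_mult:
  fixes \<phi> \<psi> :: "complex^'n \<Rightarrow> complex"
  assumes "\<phi> \<in> mult_DA" "\<psi> \<in> mult_DA"
  shows "(\<lambda>z. \<phi> z * \<psi> z) \<in> mult_DA"
  unfolding mult_DA_def mem_Collect_eq
proof (intro ballI)
  fix f :: "complex^'n \<Rightarrow> complex" assume f: "f \<in> DA_space"
  have "(\<lambda>z. \<psi> z * f z) \<in> DA_space" using assms(2) f by (auto simp: mult_DA_def)
  then have "(\<lambda>z. \<phi> z * (\<psi> z * f z)) \<in> DA_space" using assms(1) by (auto simp: mult_DA_def)
  then show "(\<lambda>z. \<phi> z * \<psi> z * f z) \<in> DA_space" by (simp add: mult.assoc)
qed

lemma mult_DA_add:
  fixes \<phi> \<psi> :: "complex^'n \<Rightarrow> complex"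
  assumes "\<phi> \<in> mult_DA" "\<psi> \<in> mult_DA"
  shows "(\<lambda>z. \<phi> z + \<psi> z) \<in> mult_DA"
  unfolding mult_DA_def mem_Collect_eq
proof (intro ballI)
  fix f :: "complex^'n \<Rightarrow> complex" assume f: "f \<in> DA_space"
  have "(\<lambda>z. \<phi> z * f z + \<psi> z * f z) \<in> DA_space"
    by (rule DA_add) (use assms f in \<open>auto simp: mult_DA_def\<close>)
  then show "(\<lambda>z. (\<phi> z + \<psi> z) * f z) \<in> DA_space" by (simp add: distrib_right)
qed

lemma mult_DA_const: "(\<lambda>z. c) \<in> mult_DA"
  unfolding mult_DA_def by (auto intro: DA_scale)

lemma mult_DA_coord: "(\<lambda>z. z $ k) \<in> mult_DA"
  unfolding mult_DA_def by (auto intro: DA_coord)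

lemma mult_DA_diff:
  fixes \<phi> \<psi> :: "complex^'n \<Rightarrow> complex"
  assumes "\<phi> \<in> mult_DA" "\<psi> \<in> mult_DA"
  shows "(\<lambda>z. \<phi> z - \<psi> z) \<in> mult_DA"
proof -
  have "(\<lambda>z. (-1) * \<psi> z) \<in> mult_DA" by (rule mult_DA_mult[OF mult_DA_const assms(2)])
  then have "(\<lambda>z. \<phi> z + (-1) * \<psi> z) \<in> mult_DA" by (rule mult_DA_add[OF assms(1)])
  then show ?thesis by simp
qed

lemma mult_DA_sum: "finite A \<Longrightarrow> (\<And>a. a \<in> A \<Longrightarrow> f a \<in> mult_DA) \<Longrightarrow> (\<lambda>z. \<Sum>a\<in>A. f a z) \<in> mult_DA"
  by (induction A rule: finite_induct) (auto intro: mult_DA_const mult_DA_add)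

lemma mult_DA_prod: "finite A \<Longrightarrow> (\<And>a. a \<in> A \<Longrightarrow> f a \<in> mult_DA) \<Longrightarrow> (\<lambda>z. \<Prod>a\<in>A. f a z) \<in> mult_DA"
  by (induction A rule: finite_induct) (auto intro: mult_DA_const mult_DA_mult)

lemma mult_DA_power: "\<phi> \<in> mult_DA \<Longrightarrow> (\<lambda>z. \<phi> z ^ n) \<in> mult_DA"
  by (induction n) (auto intro: mult_DA_const mult_DA_mult)


lemma cinner_axis:
  fixes y :: "complex^'n"
  shows "cinner (y + axis i q) (y + axis i p) = cinner y y + q * cnj (y $ i) + y $ i * cnj p + q * cnj p"
proof -
  have "(y + axis i q) $ j * cnj ((y + axis i p) $ j) =
        y $ j * cnj (y $ j) + (if j = i then q * cnj (y $ i) + y $ i * cnj p + q * cnj p else 0)" for j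
    by (auto simp: axis_def algebra_simps)
  then show ?thesis unfolding cinner_def by (simp add: sum.distrib)
qed

definition Rf :: "complex \<Rightarrow> complex \<Rightarrow> complex \<Rightarrow> complex \<Rightarrow> complex \<Rightarrow> complex" where
  "Rf c \<alpha> \<beta> \<sigma> \<tau> = (\<alpha>*\<beta>*(c - \<sigma>*\<alpha>) + c*(c - \<sigma>*\<alpha>) + \<alpha>*(\<beta>+\<sigma>)*(c - \<tau>*\<beta>)) /
      ((c - \<sigma>*\<alpha> - \<tau>*\<beta> - \<sigma>*\<tau>)*(c - \<tau>*\<beta>)*(c - \<sigma>*\<alpha>)*c)"

lemma Rf_abs:
  fixes A B E c N \<sigma> \<tau> :: complex
  assumes "E \<noteq> 0" "B \<noteq> 0" "A \<noteq> 0" "c \<noteq> 0" "\<sigma> \<noteq> 0" "\<tau> \<noteq> 0"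
    and key: "B*A*c - E*A*c - E*B*c + E*B*A = \<sigma>*\<tau>*N"
  shows "(1/E - 1/B - 1/A + 1/c) / (\<tau> * \<sigma>) = N / (E*B*A*c)"
proof -
  have "1/E - 1/B - 1/A + 1/c = (B*A*c - E*A*c - E*B*c + E*B*A) / (E*B*A*c)"
    using assms(1-4) by (simp add: field_simps)
  also have "\<dots> = \<sigma>*\<tau>*N / (E*B*A*c)" by (simp add: key)
  finally show ?thesis using assms(5,6) by (simp add: field_simps)
qed

lemma Rf_id:
  assumes "\<sigma> \<noteq> 0" "\<tau> \<noteq> 0" "c \<noteq> 0" "c - \<sigma>*\<alpha> \<noteq> 0" "c - \<tau>*\<beta> \<noteq> 0" "c - \<sigma>*\<alpha> - \<tau>*\<beta> - \<sigma>*\<tau> \<noteq> 0"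
  shows "(1/(c - \<sigma>*\<alpha> - \<tau>*\<beta> - \<sigma>*\<tau>) - 1/(c - \<tau>*\<beta>) - 1/(c - \<sigma>*\<alpha>) + 1/c) / (\<tau> * \<sigma>) = Rf c \<alpha> \<beta> \<sigma> \<tau>"
  unfolding Rf_def
  by (rule Rf_abs[OF assms(6,5,4,3,1,2)]) algebra

lemma K_ne:
  assumes "z \<in> unit_ball" "w \<in> unit_ball"
  shows "1 - cinner z w \<noteq> 0"
  using cinner_abs_lt[OF assms] by auto

lemma axis_ball:
  fixes y :: "complex^'n"
  assumes "y \<in> unit_ball" "cmod p < 1 - norm y"
  shows "y + axis i p \<in> unit_ball"
proof -
  have "norm (y + axis i p) \<le> norm y + cmod p"
    using norm_triangle_ineq[of y "axis i p"] by (simp add: norm_axis)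
  then show ?thesis using assms by simp
qed

lemma block_id:
  fixes y :: "complex^'n"
  assumes y: "y \<in> unit_ball" and p: "cmod p < 1 - norm y" "p \<noteq> 0" and q: "cmod q < 1 - norm y" "q \<noteq> 0"
  shows "(DA_kernel (y + axis i q) (y + axis i p) - DA_kernel y (y + axis i p) - DA_kernel (y + axis i q) y + DA_kernel y y)
          / (cnj p * q) = Rf (1 - cinner y y) (cnj (y $ i)) (y $ i) q (cnj p)"
proof -
  define c where "c = 1 - cinner y y"
  define \<alpha> where "\<alpha> = cnj (y $ i)"
  define \<beta> where "\<beta> = y $ i"
  have yp: "y + axis i p \<in> unit_ball" and yq: "y + axis i q \<in> unit_ball"
    using axis_ball[OF y] p q by auto
  have e1: "1 - cinner (y + axis i q) (y + axis i p) = c - q*\<alpha> - cnj p*\<beta> - q*cnj p"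
    unfolding c_def \<alpha>_def \<beta>_def cinner_axis by (simp add: algebra_simps)
  have e2: "1 - cinner y (y + axis i p) = c - cnj p*\<beta>"
    using cinner_axis[of y i 0 p] unfolding c_def \<beta>_def by (simp add: algebra_simps)
  have e3: "1 - cinner (y + axis i q) y = c - q*\<alpha>"
    using cinner_axis[of y i q 0] unfolding c_def \<alpha>_def by (simp add: algebra_simps)
  have n1: "c - q*\<alpha> - cnj p*\<beta> - q*cnj p \<noteq> 0" using K_ne[OF yq yp] e1 by simp
  have n2: "c - cnj p*\<beta> \<noteq> 0" using K_ne[OF y yp] e2 by simp
  have n3: "c - q*\<alpha> \<noteq> 0" using K_ne[OF yq y] e3 by simp
  have n4: "c \<noteq> 0" using K_ne[OF y y] c_def by simp
  have "(1/(c - q*\<alpha> - cnj p*\<beta> - q*cnj p) - 1/(c - cnj p*\<beta>) - 1/(c - q*\<alpha>) + 1/c) / (cnj p * q)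
        = Rf c \<alpha> \<beta> q (cnj p)"
    by (rule Rf_id) (use p q n1 n2 n3 n4 in auto)
  then show ?thesis
    unfolding DA_kernel_def e1 e2 e3 c_def[symmetric] \<alpha>_def[symmetric] \<beta>_def[symmetric]
    by (simp add: c_def \<alpha>_def \<beta>_def)
qed

lemma four_point:
  fixes y :: "complex^'n" and f :: "complex^'n \<Rightarrow> complex" and i :: 'n
  assumes y: "y \<in> unit_ball" and t: "cmod t < 1 - norm y" "t \<noteq> 0" and s: "cmod s < 1 - norm y" "s \<noteq> 0"
  defines "w \<equiv> (\<lambda>k::nat. if k = 0 then y + axis i t else if k = 1 then y else if k = 2 then y + axis i s else y)"
      and "a \<equiv> (\<lambda>k::nat. if k = 0 then 1/cnj t else if k = 1 then -1/cnj t else if k = 2 then -1/cnj s else 1/cnj s)"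
  shows "(\<Sum>k<4. cnj (a k) * f (w k)) = (f (y + axis i t) - f y)/t - (f (y + axis i s) - f y)/s"
    and "\<forall>k<4. w k \<in> unit_ball"
    and "Qf a w 4 = Rf (1 - cinner y y) (cnj (y $ i)) (y $ i) t (cnj t) - Rf (1 - cinner y y) (cnj (y $ i)) (y $ i) s (cnj t)
                  - Rf (1 - cinner y y) (cnj (y $ i)) (y $ i) t (cnj s) + Rf (1 - cinner y y) (cnj (y $ i)) (y $ i) s (cnj s)"
proof -
  show "(\<Sum>k<4. cnj (a k) * f (w k)) = (f (y + axis i t) - f y)/t - (f (y + axis i s) - f y)/s"
    using t s by (simp add: a_def w_def numeral_eq_Suc diff_divide_distrib)
  show "\<forall>k<4. w k \<in> unit_ball" using axis_ball[OF y] t s y by (auto simp: w_def)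
  define G where "G = (\<lambda>p q. (DA_kernel (y + axis i q) (y + axis i p) - DA_kernel y (y + axis i p)
        - DA_kernel (y + axis i q) y + DA_kernel y y) / (cnj p * q))"
  have "Qf a w 4 = G t t - G t s - G s t + G s s"
    using t s by (simp add: Qf_def a_def w_def G_def numeral_eq_Suc field_simps)
  also have "\<dots> = Rf (1 - cinner y y) (cnj (y $ i)) (y $ i) t (cnj t) - Rf (1 - cinner y y) (cnj (y $ i)) (y $ i) s (cnj t)
                  - Rf (1 - cinner y y) (cnj (y $ i)) (y $ i) t (cnj s) + Rf (1 - cinner y y) (cnj (y $ i)) (y $ i) s (cnj s)"
    unfolding G_def using block_id[OF y] t s by simp
  finally show "Qf a w 4 = Rf (1 - cinner y y) (cnj (y $ i)) (y $ i) t (cnj t) - Rf (1 - cinner y y) (cnj (y $ i)) (y $ i) s (cnj t)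
                  - Rf (1 - cinner y y) (cnj (y $ i)) (y $ i) t (cnj s) + Rf (1 - cinner y y) (cnj (y $ i)) (y $ i) s (cnj s)" .
qed

lemma four_point_ex:
  fixes y :: "complex^'n" and f :: "complex^'n \<Rightarrow> complex" and i :: 'n
  assumes y: "y \<in> unit_ball" and t: "cmod t < 1 - norm y" "t \<noteq> 0" and s: "cmod s < 1 - norm y" "s \<noteq> 0"
  shows "\<exists>w a. (\<forall>k<4. w k \<in> unit_ball) \<and>
     (\<Sum>k<4. cnj (a k) * f (w k)) = (f (y + axis i t) - f y)/t - (f (y + axis i s) - f y)/s \<and>
     Qf a w 4 = Rf (1 - cinner y y) (cnj (y $ i)) (y $ i) t (cnj t) - Rf (1 - cinner y y) (cnj (y $ i)) (y $ i) s (cnj t)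
                  - Rf (1 - cinner y y) (cnj (y $ i)) (y $ i) t (cnj s) + Rf (1 - cinner y y) (cnj (y $ i)) (y $ i) s (cnj s)"
proof (intro exI conjI)
  show "\<forall>k<4. (\<lambda>k::nat. if k = 0 then y + axis i t else if k = 1 then y else if k = 2 then y + axis i s else y) k \<in> unit_ball"
    by (rule four_point(2)[OF y t s])
  show "(\<Sum>k<4. cnj ((\<lambda>k::nat. if k = 0 then 1/cnj t else if k = 1 then -1/cnj t else if k = 2 then -1/cnj s else 1/cnj s) k)
      * f ((\<lambda>k::nat. if k = 0 then y + axis i t else if k = 1 then y else if k = 2 then y + axis i s else y) k))
      = (f (y + axis i t) - f y)/t - (f (y + axis i s) - f y)/s"
    by (rule four_point(1)[OF y t s])
  show "Qf (\<lambda>k::nat. if k = 0 then 1/cnj t else if k = 1 then -1/cnj t else if k = 2 then -1/cnj s else 1/cnj s)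
          (\<lambda>k::nat. if k = 0 then y + axis i t else if k = 1 then y else if k = 2 then y + axis i s else y) 4
     = Rf (1 - cinner y y) (cnj (y $ i)) (y $ i) t (cnj t) - Rf (1 - cinner y y) (cnj (y $ i)) (y $ i) s (cnj t)
                  - Rf (1 - cinner y y) (cnj (y $ i)) (y $ i) t (cnj s) + Rf (1 - cinner y y) (cnj (y $ i)) (y $ i) s (cnj s)"
    by (rule four_point(3)[OF y t s])
qed

lemma norm4: "cmod (a - b - c + d) \<le> cmod a + cmod b + cmod c + cmod d"
  using norm_triangle_ineq[of "a - b - c" d] norm_triangle_ineq4[of "a - b" c] norm_triangle_ineq4[of a b]
  by linarith

lemma DA_line_diff:
  fixes f :: "complex^'n \<Rightarrow> complex" and y :: "complex^'n" and i :: 'n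
  assumes Cf: "\<And>m w a. (\<forall>i<m. w i \<in> unit_ball) \<Longrightarrow> (cmod (\<Sum>i<m. cnj (a i) * f (w i)))\<^sup>2 \<le> C * Re (Qf a w m)"
    and y: "y \<in> unit_ball"
  shows "(\<lambda>t. f (y + axis i t)) field_differentiable (at 0)"
proof -
  define R where "R = (\<lambda>\<sigma> \<tau>. Rf (1 - cinner y y) (cnj (y $ i)) (y $ i) \<sigma> \<tau>)"
  define D where "D = (\<lambda>t. (f (y + axis i t) - f y) / t)"
  have c0: "1 - cinner y y \<noteq> 0" using K_ne[OF y y] .
  have contR: "isCont (\<lambda>z. R (fst z) (snd z)) (0,0)"
    unfolding R_def Rf_def using c0 by (intro continuous_intros) simp_all
  define R0 where "R0 = R 0 0"
  have Rclose: "\<exists>\<delta>>0. \<forall>\<sigma> \<tau>. cmod \<sigma> < \<delta> \<longrightarrow> cmod \<tau> < \<delta> \<longrightarrow> cmod (R \<sigma> \<tau> - R0) < \<epsilon>"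
    if "\<epsilon> > 0" for \<epsilon>
  proof -
    have "\<exists>\<delta>>0. \<forall>z. dist z (0,0) < \<delta> \<longrightarrow> dist (R (fst z) (snd z)) (R 0 0) < \<epsilon>"
      using contR that unfolding continuous_at_eps_delta by simp
    then obtain \<delta> where \<delta>: "\<delta> > 0" "\<And>z. dist z (0,0) < \<delta> \<Longrightarrow> dist (R (fst z) (snd z)) (R 0 0) < \<epsilon>"
      by blast
    show ?thesis
    proof (intro exI[of _ "\<delta>/2"] conjI allI impI)
      fix \<sigma> \<tau> :: complex assume "cmod \<sigma> < \<delta>/2" "cmod \<tau> < \<delta>/2"
      then have "dist (\<sigma>, \<tau>) (0,0) < \<delta>" using norm_Pair_le[of \<sigma> \<tau>] by (simp add: dist_norm)
      then show "cmod (R \<sigma> \<tau> - R0) < \<epsilon>" using \<delta>(2)[of "(\<sigma>, \<tau>)"] by (simp add: R0_def dist_norm)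
    qed (use \<delta> in simp)
  qed
  have cauchy: "cauchy_filter (filtermap D (at 0))"
    unfolding cauchy_filter_metric_filtermap
  proof (intro allI impI)
    fix e :: real assume e: "e > 0"
    define \<epsilon> where "\<epsilon> = e^2 / (4 * (\<bar>C\<bar> + 1))"
    have \<epsilon>: "\<epsilon> > 0" using e by (simp add: \<epsilon>_def)
    obtain \<delta> where \<delta>: "\<delta> > 0" "\<And>\<sigma> \<tau>. cmod \<sigma> < \<delta> \<Longrightarrow> cmod \<tau> < \<delta> \<Longrightarrow> cmod (R \<sigma> \<tau> - R0) < \<epsilon>"
      using Rclose[OF \<epsilon>] by blast
    define d where "d = min \<delta> (1 - norm y)"
    have d: "d > 0" using \<delta> y by (simp add: d_def)
    show "\<exists>P. eventually P (at 0) \<and> (\<forall>x y. P x \<and> P y \<longrightarrow> dist (D x) (D y) < e)"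
    proof (intro exI conjI allI impI)
      show "eventually (\<lambda>t. t \<noteq> 0 \<and> cmod t < d) (at (0::complex))"
        unfolding eventually_at using d by (auto intro!: exI[of _ d] simp: dist_norm)
      fix t s :: complex assume ts: "(t \<noteq> 0 \<and> cmod t < d) \<and> (s \<noteq> 0 \<and> cmod s < d)"
      have t': "cmod t < 1 - norm y" "t \<noteq> 0" and s': "cmod s < 1 - norm y" "s \<noteq> 0"
        using ts by (auto simp: d_def)
      have td: "cmod t < \<delta>" "cmod s < \<delta>" "cmod (cnj t) < \<delta>" "cmod (cnj s) < \<delta>"
        using ts by (auto simp: d_def)
      obtain w a where wa: "\<forall>k<4. w k \<in> unit_ball"
        "(\<Sum>k<4. cnj (a k) * f (w k)) = D t - D s"
        "Qf a w 4 = R t (cnj t) - R s (cnj t) - R t (cnj s) + R s (cnj s)"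
        using four_point_ex[OF y t' s', of f i] unfolding D_def R_def by blast
      define q where "q = R t (cnj t) - R s (cnj t) - R t (cnj s) + R s (cnj s)"
      have ineq: "(cmod (D t - D s))\<^sup>2 \<le> C * Re q"
        using Cf[OF wa(1), of a] wa(2,3) by (simp add: q_def)
      have "q = (R t (cnj t) - R0) - (R s (cnj t) - R0) - (R t (cnj s) - R0) + (R s (cnj s) - R0)"
        by (simp add: q_def)
      also have "cmod \<dots> \<le> cmod (R t (cnj t) - R0) + cmod (R s (cnj t) - R0) + cmod (R t (cnj s) - R0) + cmod (R s (cnj s) - R0)"
        by (rule norm4)
      also have "\<dots> < \<epsilon> + \<epsilon> + \<epsilon> + \<epsilon>"
        using \<delta>(2)[of t "cnj t"] \<delta>(2)[of s "cnj t"] \<delta>(2)[of t "cnj s"] \<delta>(2)[of s "cnj s"] td by simp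
      finally have qb: "cmod q < 4 * \<epsilon>" by simp
      have "C * Re q \<le> \<bar>C\<bar> * \<bar>Re q\<bar>" by (metis abs_ge_self abs_mult)
      also have "\<dots> \<le> \<bar>C\<bar> * cmod q" by (rule mult_left_mono[OF abs_Re_le_cmod]) simp
      also have "\<dots> \<le> \<bar>C\<bar> * (4 * \<epsilon>)" using qb by (intro mult_left_mono) auto
      also have "\<dots> < (\<bar>C\<bar> + 1) * (4 * \<epsilon>)" using \<epsilon> by simp
      also have "\<dots> = e^2" using \<epsilon>_def by (simp add: field_simps)
      finally have lt: "C * Re q < e^2" .
      have "(cmod (D t - D s))\<^sup>2 < e^2" using ineq lt by linarith
      then have "cmod (D t - D s) < e" by (rule power2_less_imp_less) (use e in simp)
      then show "dist (D t) (D s) < e" by (simp add: dist_norm)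
    qed
  qed
  then have "convergent_filter (filtermap D (at 0))" by (rule cauchy_filter_convergent)
  then obtain l where "filtermap D (at 0) \<le> nhds l" by (auto simp: convergent_filter_iff)
  then have "(D \<longlongrightarrow> l) (at 0)" by (simp add: filterlim_def)
  then have "((\<lambda>t. f (y + axis i t)) has_field_derivative l) (at 0)"
    unfolding has_field_derivative_iff D_def by simp
  then show ?thesis by (auto simp: field_differentiable_def)
qed

lemma tendsto_K:
  fixes g h :: "'a \<Rightarrow> complex^'n"
  assumes "(g \<longlongrightarrow> a) F" "(h \<longlongrightarrow> b) F" "1 - cinner a b \<noteq> 0"
  shows "((\<lambda>x. DA_kernel (g x) (h x)) \<longlongrightarrow> DA_kernel a b) F"
  using assms unfolding DA_kernel_def cinner_def by (intro tendsto_intros) auto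

lemma DA_cont:
  fixes f :: "complex^'n \<Rightarrow> complex" and y :: "complex^'n"
  assumes Cf: "\<And>m w a. (\<forall>i<m. w i \<in> unit_ball) \<Longrightarrow> (cmod (\<Sum>i<m. cnj (a i) * f (w i)))\<^sup>2 \<le> C * Re (Qf a w m)"
    and y: "y \<in> unit_ball"
  shows "isCont f y"
proof -
  define g where "g = (\<lambda>x. C * Re (DA_kernel x x - DA_kernel y x - DA_kernel x y + DA_kernel y y))"
  have two: "(cmod (f x - f y))\<^sup>2 \<le> g x" if x: "x \<in> unit_ball" for x
  proof -
    define w where "w = (\<lambda>k::nat. if k = 0 then x else y)"
    define a where "a = (\<lambda>k::nat. if k = 0 then (1::complex) else -1)"
    have w: "\<forall>k<2. w k \<in> unit_ball" using x y by (auto simp: w_def)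
    have "(\<Sum>k<2. cnj (a k) * f (w k)) = f x - f y" by (simp add: a_def w_def numeral_eq_Suc)
    moreover have "Qf a w 2 = DA_kernel x x - DA_kernel y x - DA_kernel x y + DA_kernel y y"
      by (simp add: Qf_def a_def w_def numeral_eq_Suc)
    ultimately show ?thesis using Cf[OF w, of a] by (simp add: g_def)
  qed
  have c0: "1 - cinner y y \<noteq> 0" using K_ne[OF y y] .
  have "(g \<longlongrightarrow> C * Re (DA_kernel y y - DA_kernel y y - DA_kernel y y + DA_kernel y y)) (at y)"
    unfolding g_def by (intro tendsto_intros tendsto_K) (use c0 in auto)
  then have g0: "(g \<longlongrightarrow> 0) (at y)" by simp
  have sq0: "((\<lambda>x. sqrt (g x)) \<longlongrightarrow> 0) (at y)"
    using tendsto_real_sqrt[OF g0] by simp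
  have ev: "eventually (\<lambda>x. norm (f x - f y) \<le> sqrt (g x)) (at y)"
    unfolding eventually_at_topological
  proof (intro exI[of _ unit_ball] conjI ballI impI)
    fix x :: "complex^'n" assume "x \<in> unit_ball"
    then show "norm (f x - f y) \<le> sqrt (g x)" using two by (intro real_le_rsqrt) auto
  qed (use y in auto)
  have "((\<lambda>x. f x - f y) \<longlongrightarrow> 0) (at y)" by (rule Lim_null_comparison[OF ev sq0])
  then have "(f \<longlongrightarrow> f y) (at y)" by (rule LIM_zero_cancel)
  then show ?thesis by (simp add: isCont_def)
qed

lemma DA_SH:
  fixes f :: "complex^'n \<Rightarrow> complex"
  assumes "f \<in> DA_space"
  shows "SH unit_ball f"
proof -
  obtain C where Cf: "\<And>m w a. (\<forall>i<m. w i \<in> unit_ball) \<Longrightarrow>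
     (cmod (\<Sum>i<m. cnj (a i) * f (w i)))\<^sup>2 \<le> C * Re (Qf a w m)" using DA_spaceD[OF assms] by blast
  show ?thesis unfolding SH_def
  proof (intro conjI ballI allI)
    show "continuous_on unit_ball f"
      by (intro continuous_at_imp_continuous_on ballI DA_cont[OF Cf])
    fix y i assume "y \<in> (unit_ball :: (complex^'n) set)"
    then show "(\<lambda>t. f (y + axis i t)) field_differentiable at 0"
      using DA_line_diff[of f C y i] Cf by blast
  qed
qed

lemma mult_DA_SH: "\<phi> \<in> mult_DA \<Longrightarrow> SH unit_ball \<phi>"
  by (rule DA_SH[OF mult_DA_sub])


lemma monom0: "monom_at 0 \<alpha> x = (\<Prod>i\<in>UNIV. (x $ i) ^ \<alpha> i)"
  by (simp add: monom_at_def)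

lemma is_poly_zero: "is_poly (\<lambda>x. 0)"
  unfolding is_poly_def by (intro exI[of _ "{}"]) auto

lemma is_poly_const: "is_poly (\<lambda>x. c)"
  unfolding is_poly_def
  by (intro exI[of _ "{\<lambda>_. 0}"] exI[of _ "\<lambda>_. c"]) (simp add: monom_at_def)

lemma is_poly_cong: "is_poly p \<Longrightarrow> (\<And>x. q x = p x) \<Longrightarrow> is_poly q"
  unfolding is_poly_def by auto

lemma is_poly_add:
  assumes "is_poly p" "is_poly q"
  shows "is_poly (\<lambda>x. p x + q x)"
proof -
  obtain A c where A: "finite A" "\<And>x. p x = (\<Sum>\<alpha>\<in>A. c \<alpha> * monom_at 0 \<alpha> x)"
    using assms(1) unfolding is_poly_def by blast
  obtain B d where B: "finite B" "\<And>x. q x = (\<Sum>\<alpha>\<in>B. d \<alpha> * monom_at 0 \<alpha> x)"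
    using assms(2) unfolding is_poly_def by blast
  define e where "e = (\<lambda>\<alpha>. (if \<alpha> \<in> A then c \<alpha> else 0) + (if \<alpha> \<in> B then d \<alpha> else 0))"
  have "(\<Sum>\<alpha>\<in>A \<union> B. e \<alpha> * monom_at 0 \<alpha> x) = p x + q x" for x
  proof -
    have pw: "e \<alpha> * monom_at 0 \<alpha> x = (if \<alpha> \<in> A then c \<alpha> * monom_at 0 \<alpha> x else 0)
              + (if \<alpha> \<in> B then d \<alpha> * monom_at 0 \<alpha> x else 0)" for \<alpha>
      by (auto simp: e_def distrib_right)
    have "(\<Sum>\<alpha>\<in>A \<union> B. e \<alpha> * monom_at 0 \<alpha> x) =
          (\<Sum>\<alpha>\<in>A \<union> B. (if \<alpha> \<in> A then c \<alpha> * monom_at 0 \<alpha> x else 0)) +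
          (\<Sum>\<alpha>\<in>A \<union> B. (if \<alpha> \<in> B then d \<alpha> * monom_at 0 \<alpha> x else 0))"
      by (simp only: pw sum.distrib)
    also have "(\<Sum>\<alpha>\<in>A \<union> B. (if \<alpha> \<in> A then c \<alpha> * monom_at 0 \<alpha> x else 0)) = p x"
      unfolding A(2) by (rule sum.mono_neutral_cong_right) (use A(1) B(1) in auto)
    also have "(\<Sum>\<alpha>\<in>A \<union> B. (if \<alpha> \<in> B then d \<alpha> * monom_at 0 \<alpha> x else 0)) = q x"
      unfolding B(2) by (rule sum.mono_neutral_cong_right) (use A(1) B(1) in auto)
    finally show ?thesis .
  qed
  then show ?thesis unfolding is_poly_def using A(1) B(1) by (metis finite_UnI)
qed

lemma is_poly_scale:
  assumes "is_poly p"
  shows "is_poly (\<lambda>x. a * p x)"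
proof -
  obtain A c where A: "finite A" "\<And>x. p x = (\<Sum>\<alpha>\<in>A. c \<alpha> * monom_at 0 \<alpha> x)"
    using assms(1) unfolding is_poly_def by blast
  show ?thesis unfolding is_poly_def
    by (intro exI[of _ A] exI[of _ "\<lambda>\<alpha>. a * c \<alpha>"] conjI A(1) allI)
       (simp add: A(2) sum_distrib_left mult.assoc)
qed

lemma monom_shift: "monom_at 0 (\<alpha>(k := Suc (\<alpha> k))) x = x $ k * monom_at 0 \<alpha> x"
proof -
  have "(x $ i) ^ ((\<alpha>(k := Suc (\<alpha> k))) i) = (if i = k then x $ i else 1) * (x $ i) ^ \<alpha> i" for i
    by auto
  then have "monom_at 0 (\<alpha>(k := Suc (\<alpha> k))) x = (\<Prod>i\<in>UNIV. (if i = k then x $ i else 1) * (x $ i) ^ \<alpha> i)"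
    unfolding monom0 by simp
  also have "\<dots> = x $ k * monom_at 0 \<alpha> x"
    unfolding prod.distrib monom0 by (simp add: prod.delta)
  finally show ?thesis .
qed

lemma is_poly_coord_mult:
  fixes p :: "complex^'n \<Rightarrow> complex"
  assumes "is_poly p"
  shows "is_poly (\<lambda>x. x $ k * p x)"
proof -
  obtain A c where A: "finite A" "\<And>x. p x = (\<Sum>\<alpha>\<in>A. c \<alpha> * monom_at 0 \<alpha> x)"
    using assms(1) unfolding is_poly_def by blast
  define sh where "sh = (\<lambda>\<alpha>::'n \<Rightarrow> nat. \<alpha>(k := Suc (\<alpha> k)))"
  have inj: "inj_on sh A"
  proof
    fix \<alpha> \<beta> :: "'n \<Rightarrow> nat" assume eq: "sh \<alpha> = sh \<beta>"
    have "\<alpha> i = \<beta> i" for i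
    proof -
      have "sh \<alpha> i = sh \<beta> i" using eq by simp
      then show ?thesis by (cases "i = k") (simp_all add: sh_def)
    qed
    then show "\<alpha> = \<beta>" by auto
  qed
  define d where "d = (\<lambda>\<beta>. c (the_inv_into A sh \<beta>))"
  have eqn: "(\<Sum>\<beta>\<in>sh ` A. d \<beta> * monom_at 0 \<beta> x) = x $ k * p x" for x
  proof -
    have "(\<Sum>\<beta>\<in>sh ` A. d \<beta> * monom_at 0 \<beta> x) = (\<Sum>\<alpha>\<in>A. d (sh \<alpha>) * monom_at 0 (sh \<alpha>) x)"
      by (rule sum.reindex[OF inj, unfolded comp_def])
    also have "\<dots> = (\<Sum>\<alpha>\<in>A. c \<alpha> * (x $ k * monom_at 0 \<alpha> x))"
      by (intro sum.cong refl) (simp add: d_def the_inv_into_f_f[OF inj], simp add: sh_def monom_shift)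
    also have "\<dots> = x $ k * (\<Sum>\<alpha>\<in>A. c \<alpha> * monom_at 0 \<alpha> x)"
      by (simp add: sum_distrib_left mult.left_commute)
    also have "\<dots> = x $ k * p x" by (simp only: A(2))
    finally show ?thesis .
  qed
  show ?thesis unfolding is_poly_def
    by (intro exI[of _ "sh ` A"] exI[of _ d] conjI finite_imageI A(1) allI) (simp add: eqn)
qed

lemma is_poly_lin_mult:
  fixes p :: "complex^'n \<Rightarrow> complex"
  assumes "is_poly p"
  shows "is_poly (\<lambda>x. (x $ k - a) * p x)"
  by (rule is_poly_cong[OF is_poly_add[OF is_poly_coord_mult[OF assms, of k] is_poly_scale[OF assms, of "-a"]]])
     (simp add: algebra_simps)

lemma is_poly_lin_power_mult:
  fixes p :: "complex^'n \<Rightarrow> complex"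
  assumes "is_poly p"
  shows "is_poly (\<lambda>x. (x $ k - a) ^ n * p x)"
proof (induction n)
  case 0 then show ?case using assms by simp
next
  case (Suc n)
  show ?case by (rule is_poly_cong[OF is_poly_lin_mult[OF Suc, of k a]]) (simp add: mult.assoc)
qed

lemma is_poly_monom_mult:
  fixes p :: "complex^'n \<Rightarrow> complex"
  assumes "is_poly p"
  shows "is_poly (\<lambda>x. (\<Prod>i\<in>S. (x $ i - z $ i) ^ \<beta> i) * p x)"
proof (induction S rule: finite_induct[OF finite])
  case 1 then show ?case using assms by simp
next
  case (2 i S)
  show ?case by (rule is_poly_cong[OF is_poly_lin_power_mult[OF "2.IH", of i "z $ i" "\<beta> i"]])
    (use 2 in \<open>simp add: mult.assoc\<close>)
qed

lemma is_poly_sum: "finite B \<Longrightarrow> (\<And>b. b \<in> B \<Longrightarrow> is_poly (f b)) \<Longrightarrow> is_poly (\<lambda>x. \<Sum>b\<in>B. f b x)"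
  by (induction B rule: finite_induct) (auto intro: is_poly_zero is_poly_add)

lemma maxideal_poly:
  fixes p :: "complex^'n \<Rightarrow> complex"
  assumes "finite B" "\<forall>\<beta>\<in>B. is_poly (q \<beta>)" "\<forall>x. p x = (\<Sum>\<beta>\<in>B. q \<beta> x * monom_at z \<beta> x)"
  shows "is_poly p"
proof (rule is_poly_cong[OF _ assms(3)[rule_format]])
  show "is_poly (\<lambda>x. \<Sum>\<beta>\<in>B. q \<beta> x * monom_at z \<beta> x)"
  proof (rule is_poly_sum[OF assms(1)])
    fix \<beta> assume "\<beta> \<in> B"
    then have "is_poly (\<lambda>x. (\<Prod>i\<in>UNIV. (x $ i - z $ i) ^ \<beta> i) * q \<beta> x)"
      using assms(2) by (intro is_poly_monom_mult) auto
    then show "is_poly (\<lambda>x. q \<beta> x * monom_at z \<beta> x)"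
      by (rule is_poly_cong) (simp add: monom_at_def mult.commute)
  qed
qed

lemma SH_monom: "SH U (monom_at z \<beta>)"
proof -
  have "SH U (\<lambda>x. \<Prod>i\<in>UNIV. (x $ i - z $ i) ^ \<beta> i)"
    by (intro SH_prod SH_power SH_diff SH_coord SH_const) auto
  then show ?thesis by (simp add: monom_at_def[abs_def])
qed

lemma SH_poly:
  fixes p :: "complex^'n \<Rightarrow> complex"
  assumes "is_poly p"
  shows "SH U p"
proof -
  obtain A c where A: "finite A" "\<And>x. p x = (\<Sum>\<alpha>\<in>A. c \<alpha> * monom_at 0 \<alpha> x)"
    using assms(1) unfolding is_poly_def by blast
  have "SH U (\<lambda>x. \<Sum>\<alpha>\<in>A. c \<alpha> * monom_at 0 \<alpha> x)"
    by (intro SH_sum SH_mult SH_const SH_monom A(1))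
  moreover have "p = (\<lambda>x. \<Sum>\<alpha>\<in>A. c \<alpha> * monom_at 0 \<alpha> x)" using A(2) by auto
  ultimately show ?thesis by simp
qed

lemma mult_DA_monom: "monom_at z \<beta> \<in> mult_DA"
proof -
  have "(\<lambda>x. \<Prod>i\<in>UNIV. (x $ i - z $ i) ^ \<beta> i) \<in> mult_DA"
    by (intro mult_DA_prod mult_DA_power mult_DA_diff mult_DA_coord mult_DA_const) auto
  then show ?thesis by (simp add: monom_at_def[abs_def])
qed

lemma vset_monom:
  fixes U :: "(complex^'n) set" and z :: "complex^'n"
  assumes U: "open U"
  shows "vset U z (\<Sum>i\<in>S. \<beta> i) (\<lambda>x::complex^'n. \<Prod>i\<in>S. (x $ i - z $ i) ^ \<beta> i)"
proof (induction S rule: finite_induct[OF finite])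
  case 1 then show ?case using vset.base[OF SH_const[of U 1]] by simp
next
  case (2 i S)
  have h: "SH U (\<lambda>x::complex^'n. x $ i - z $ i)" by (intro SH_diff SH_coord SH_const)
  have "vset U z (\<beta> i + (\<Sum>i\<in>S. \<beta> i)) (\<lambda>x::complex^'n. (x $ i - z $ i) ^ \<beta> i * (\<Prod>i\<in>S. (x $ i - z $ i) ^ \<beta> i))"
    by (rule vset_prod[OF U "2.IH" vset_power[OF U h]]) simp
  then show ?case using 2 by simp
qed

lemma vset_monom_at:
  fixes U :: "(complex^'n) set" and z :: "complex^'n"
  assumes U: "open U"
  shows "vset U z (mdeg \<beta>) (monom_at z \<beta>)"
  using vset_monom[OF U, where z=z and S=UNIV and \<beta>=\<beta>] by (simp add: mdeg_def monom_at_def[abs_def])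


lemma sep:
  fixes \<Lambda> :: "(complex^'n) set" and z :: "complex^'n"
  assumes interp: "interpolating \<Lambda>" and z: "z \<in> unit_ball" "z \<notin> \<Lambda>"
  shows "\<exists>\<delta>>0. \<forall>y\<in>\<Lambda>. \<delta> \<le> norm (y - z)"
proof (rule ccontr)
  assume "\<not> ?thesis"
  then have "\<forall>r>0. \<exists>y\<in>\<Lambda>. norm (y - z) < r" by (meson not_le)
  then obtain pick where pick: "\<And>r. r > 0 \<Longrightarrow> pick r \<in> \<Lambda> \<and> norm (pick r - z) < r" by metis
  have pos: "norm (y - z) > 0" if "y \<in> \<Lambda>" for y using z(2) that by auto
  define s where "s = rec_nat (pick 1) (\<lambda>n x. pick (norm (x - z) / 2))"
  have s0: "s 0 = pick 1" and sS: "s (Suc n) = pick (norm (s n - z) / 2)" for n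
    by (simp_all add: s_def)
  have sL: "s n \<in> \<Lambda>" for n
  proof (induction n)
    case 0 then show ?case using pick[of 1] s0 by simp
  next
    case (Suc n) then show ?case using pick[of "norm (s n - z) / 2"] pos[OF Suc] sS by simp
  qed
  have dec: "norm (s (Suc n) - z) < norm (s n - z) / 2" for n
    using pick[of "norm (s n - z)/2"] pos[OF sL[of n]] sS by auto
  have dec1: "norm (s (Suc n) - z) < norm (s n - z)" for n
    using dec[of n] norm_ge_zero[of "s (Suc n) - z"] by linarith
  have bnd: "norm (s n - z) \<le> (1/2)^n" for n
  proof (induction n)
    case 0 then show ?case using pick[of 1] s0 by simp
  next
    case (Suc n) then show ?case using dec[of n] by simp
  qed
  have "(\<lambda>n. (1/2::real)^n) \<longlonglongrightarrow> 0" by (rule LIMSEQ_power_zero) simp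
  then have "(\<lambda>n. s n - z) \<longlonglongrightarrow> 0"
    by (intro Lim_null_comparison[OF _ \<open>(\<lambda>n. (1/2::real)^n) \<longlonglongrightarrow> 0\<close>] always_eventually allI bnd)
  then have lim: "s \<longlonglongrightarrow> z" by (rule LIM_zero_cancel)
  have mono: "norm (s n - z) < norm (s m - z)" if "m < n" for m n
    using lift_Suc_mono_less[of "\<lambda>n. - norm (s n - z)" m n] dec1 that by simp
  have inj: "m = n" if "s m = s n" for m n
  proof (rule ccontr)
    assume "m \<noteq> n"
    then consider "m < n" | "n < m" by linarith
    then show False using mono that by (cases) (metis less_irrefl)+
  qed
  define A where "A = range (\<lambda>n. s (2*n))"
  define g where "g = (\<lambda>x. if x \<in> A then (1::complex) else 0)"
  have "g ` \<Lambda> \<subseteq> {0, 1}" by (auto simp: g_def)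
  then have "bounded (g ` \<Lambda>)" by (rule bounded_subset[rotated]) simp
  then obtain \<phi> where \<phi>: "\<phi> \<in> mult_DA" "\<forall>y\<in>\<Lambda>. \<phi> y = g y"
    using interp unfolding interpolating_def by blast
  have "continuous_on unit_ball \<phi>" using mult_DA_SH[OF \<phi>(1)] unfolding SH_def by blast
  then have cont: "isCont \<phi> z" using z(1) continuous_on_eq_continuous_at[OF open_ball] by blast
  have L: "(\<lambda>n. \<phi> (s n)) \<longlonglongrightarrow> \<phi> z" by (rule isCont_tendsto_compose[OF cont lim])
  have sm1: "strict_mono (\<lambda>n::nat. 2*n)" by (rule strict_monoI) simp
  have sm2: "strict_mono (\<lambda>n::nat. 2*n+1)" by (rule strict_monoI) simp
  have ev: "(\<lambda>n. \<phi> (s (2*n))) \<longlonglongrightarrow> \<phi> z"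
    using LIMSEQ_subseq_LIMSEQ[OF L sm1] by (simp add: o_def)
  have od: "(\<lambda>n. \<phi> (s (2*n+1))) \<longlonglongrightarrow> \<phi> z"
    using LIMSEQ_subseq_LIMSEQ[OF L sm2] by (simp add: o_def)
  have e1: "\<phi> (s (2*n)) = 1" for n using \<phi>(2) sL[of "2*n"] by (simp add: g_def A_def)
  have e0: "\<phi> (s (2*n+1)) = 0" for n
  proof -
    have "s (2*n+1) \<notin> A"
    proof
      assume "s (2*n+1) \<in> A"
      then obtain m where "s (2*n+1) = s (2*m)" by (auto simp: A_def)
      then have "2*n+1 = 2*m" by (rule inj)
      then show False by presburger
    qed
    then show ?thesis using \<phi>(2) sL[of "2*n+1"] by (simp add: g_def)
  qed
  have "\<phi> z = 1" using ev e1 LIMSEQ_unique[OF ev] by (simp add: LIMSEQ_const_iff)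
  moreover have "\<phi> z = 0" using od e0 by (simp add: LIMSEQ_const_iff)
  ultimately show False by simp
qed

lemma norm_sq_vec: "(norm (v::complex^'n))\<^sup>2 = (\<Sum>k\<in>UNIV. (cmod (v $ k))\<^sup>2)"
  unfolding norm_vec_def L2_set_def by (simp add: sum_nonneg)

theorem lemma3p2:
  fixes \<Lambda> :: "(complex ^ 'n) set" and \<kappa> :: nat and \<aa> :: "(complex ^ 'n \<Rightarrow> complex) set"
  assumes "interpolating \<Lambda>"
    and "ideal_Md \<aa>"
    and "vanish_ideal \<kappa> \<Lambda> \<subseteq> \<aa>"
    and "z \<in> zero_set_ball \<aa>"
  shows "(\<exists>k. maxideal_pow z (k + 1) \<subseteq> poly_germ_ideal \<aa> z) \<and> poly_order \<aa> z \<le> \<kappa>"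
proof -
  have \<Lambda>b: "\<Lambda> \<subseteq> unit_ball" using assms(1) unfolding interpolating_def by blast
  have zb: "z \<in> unit_ball" and z0: "\<And>f. f \<in> \<aa> \<Longrightarrow> f z = 0"
    using assms(4) unfolding zero_set_ball_def by auto
  have ob: "open (unit_ball :: (complex^'n) set)" by simp
  have van: "\<psi> \<in> \<aa>" if psi: "\<psi> \<in> mult_DA" "\<And>y. y \<in> \<Lambda> \<Longrightarrow> vset unit_ball y (Suc \<kappa>) \<psi>" for \<psi>
  proof -
    have "\<psi> \<in> vanish_ideal \<kappa> \<Lambda>"
      unfolding vanish_ideal_def
    proof (intro CollectI conjI psi(1) allI impI ballI)
      fix "is" :: "'n list" and y assume l: "length is \<le> \<kappa>" and y: "y \<in> \<Lambda>"
      show "cpartials is \<psi> y = 0"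
        by (rule vset_cpartials_zero[OF ob psi(2)[OF y]]) (use l y \<Lambda>b in auto)
    qed
    then show ?thesis using assms(3) by blast
  qed
  have z\<Lambda>: "z \<in> \<Lambda>"
  proof (rule ccontr)
    assume zn: "z \<notin> \<Lambda>"
    obtain \<delta> where \<delta>: "\<delta> > 0" "\<forall>y\<in>\<Lambda>. \<delta> \<le> norm (y - z)"
      using sep[OF assms(1) zb zn] by blast
    define gk where "gk = (\<lambda>k (y::complex^'n). cnj (y $ k - z $ k) / of_real ((norm (y - z))\<^sup>2))"
    have "\<forall>k. \<exists>\<phi>\<in>mult_DA. \<forall>y\<in>\<Lambda>. \<phi> y = gk k y"
    proof
      fix k
      have "bounded (gk k ` \<Lambda>)"
        unfolding bounded_iff
      proof (intro exI[of _ "1/\<delta>"] ballI)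
        fix u assume "u \<in> gk k ` \<Lambda>"
        then obtain y where y: "y \<in> \<Lambda>" "u = gk k y" by blast
        have n: "\<delta> \<le> norm (y - z)" using \<delta> y by blast
        have c: "cmod (y $ k - z $ k) \<le> norm (y - z)"
          using Finite_Cartesian_Product.norm_nth_le[of "y - z" k] by simp
        have "cmod u = cmod (y $ k - z $ k) / (norm (y - z))\<^sup>2"
          by (simp add: y gk_def norm_divide norm_power flip: complex_cnj_diff)
        also have "\<dots> \<le> norm (y - z) / (norm (y - z))\<^sup>2"
          by (rule divide_right_mono[OF c]) simp
        also have "\<dots> = 1 / norm (y - z)" using n \<delta> by (simp add: power2_eq_square)
        also have "\<dots> \<le> 1 / \<delta>"
        proof (rule divide_left_mono)
          show "0 < norm (y - z) * \<delta>" using n \<delta> by (intro mult_pos_pos) auto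
        qed (use n in auto)
        finally show "norm u \<le> 1 / \<delta>" by simp
      qed
      then show "\<exists>\<phi>\<in>mult_DA. \<forall>y\<in>\<Lambda>. \<phi> y = gk k y"
        using assms(1) unfolding interpolating_def by blast
    qed
    then obtain \<Phi> where \<Phi>: "\<And>k. \<Phi> k \<in> mult_DA" "\<And>k y. y \<in> \<Lambda> \<Longrightarrow> \<Phi> k y = gk k y"
      by metis
    define \<psi>0 where "\<psi>0 = (\<lambda>x::complex^'n. 1 - (\<Sum>k\<in>UNIV. (x $ k - z $ k) * \<Phi> k x))"
    have \<psi>0M: "\<psi>0 \<in> mult_DA" unfolding \<psi>0_def
      by (intro mult_DA_diff mult_DA_const mult_DA_sum mult_DA_mult mult_DA_coord \<Phi>(1)) auto
    have \<psi>0\<Lambda>: "\<psi>0 y = 0" if y: "y \<in> \<Lambda>" for y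
    proof -
      define v where "v = y - z"
      have vn: "norm v > 0" using \<delta> y unfolding v_def by force
      have "(\<Sum>k\<in>UNIV. (y $ k - z $ k) * \<Phi> k y) = (\<Sum>k\<in>UNIV. v $ k * cnj (v $ k)) / of_real ((norm v)\<^sup>2)"
        unfolding sum_divide_distrib using \<Phi>(2)[OF y] by (simp add: gk_def v_def)
      also have "(\<Sum>k\<in>UNIV. v $ k * cnj (v $ k)) = of_real ((norm v)\<^sup>2)"
        unfolding norm_sq_vec of_real_sum by (intro sum.cong refl) (rule complex_norm_square[symmetric])
      also have "of_real ((norm v)\<^sup>2) / of_real ((norm v)\<^sup>2) = (1::complex)" using vn by simp
      finally show ?thesis by (simp add: \<psi>0_def)
    qed
    have \<psi>0z: "\<psi>0 z = 1" by (simp add: \<psi>0_def)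
    have "(\<lambda>x. \<psi>0 x ^ Suc \<kappa>) \<in> \<aa>"
    proof (rule van)
      show "(\<lambda>x. \<psi>0 x ^ Suc \<kappa>) \<in> mult_DA" by (rule mult_DA_power[OF \<psi>0M])
      fix y assume "y \<in> \<Lambda>"
      then show "vset unit_ball y (Suc \<kappa>) (\<lambda>x. \<psi>0 x ^ Suc \<kappa>)"
        by (intro vset_power[OF ob mult_DA_SH[OF \<psi>0M]] \<psi>0\<Lambda>)
    qed
    then have "\<psi>0 z ^ Suc \<kappa> = 0" by (rule z0)
    then show False using \<psi>0z by simp
  qed
  define g1 where "g1 = (\<lambda>y::complex^'n. if y = z then (1::complex) else 0)"
  have "g1 ` \<Lambda> \<subseteq> {0, 1}" by (auto simp: g1_def)
  then have "bounded (g1 ` \<Lambda>)" by (rule bounded_subset[rotated]) simp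
  then obtain \<phi> where \<phi>: "\<phi> \<in> mult_DA" "\<forall>y\<in>\<Lambda>. \<phi> y = g1 y"
    using assms(1) unfolding interpolating_def by blast
  define h where "h = (\<lambda>x. \<phi> x ^ Suc \<kappa>)"
  have hM: "h \<in> mult_DA" unfolding h_def by (rule mult_DA_power[OF \<phi>(1)])
  have hSH: "SH unit_ball h" by (rule mult_DA_SH[OF hM])
  have hz: "h z = 1" using \<phi>(2) z\<Lambda> by (simp add: h_def g1_def)
  define U where "U = h -` (- {0}) \<inter> unit_ball"
  have oU: "open U"
    using hSH continuous_on_open_vimage[OF ob] unfolding SH_def U_def by blast
  have zU: "z \<in> U" using hz zb by (simp add: U_def)
  have Usub: "U \<subseteq> unit_ball" and hU: "\<And>x. x \<in> U \<Longrightarrow> h x \<noteq> 0" by (auto simp: U_def)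
  have main: "maxideal_pow z (\<kappa> + 1) \<subseteq> poly_germ_ideal \<aa> z"
  proof
    fix p assume "p \<in> maxideal_pow z (\<kappa> + 1)"
    then obtain B q where B: "finite B" "\<forall>\<beta>\<in>B. mdeg \<beta> = \<kappa> + 1 \<and> is_poly (q \<beta>)"
        "\<forall>x. p x = (\<Sum>\<beta>\<in>B. q \<beta> x * monom_at z \<beta> x)"
      unfolding maxideal_pow_def by blast
    have pp: "is_poly p" by (rule maxideal_poly) (use B in auto)
    define F where "F = (\<lambda>\<beta> x. monom_at z \<beta> x * h x)"
    define Gf where "Gf = (\<lambda>\<beta> x. q \<beta> x * inverse (h x))"
    have Fa: "F \<beta> \<in> \<aa>" if \<beta>: "\<beta> \<in> B" for \<beta>
    proof (rule van)
      show "F \<beta> \<in> mult_DA" unfolding F_def by (rule mult_DA_mult[OF mult_DA_monom hM])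
      fix y assume y: "y \<in> \<Lambda>"
      show "vset unit_ball y (Suc \<kappa>) (F \<beta>)"
      proof (cases "y = z")
        case True
        have "vset unit_ball z (mdeg \<beta>) (monom_at z \<beta>)" by (rule vset_monom_at[OF ob])
        then have "vset unit_ball z (Suc \<kappa>) (monom_at z \<beta>)" using B(2) \<beta> by simp
        then show ?thesis unfolding F_def True by (rule vset_multSH[OF ob _ hSH]) simp
      next
        case False
        have "\<phi> y = 0" using \<phi>(2) y False by (simp add: g1_def)
        then have "vset unit_ball y (Suc \<kappa>) h"
          unfolding h_def by (rule vset_power[OF ob mult_DA_SH[OF \<phi>(1)]])
        then show ?thesis unfolding F_def by (rule vset_multSH[OF ob _ SH_monom[of _ z \<beta>]]) (simp add: mult.commute)
      qed
    qed
    have Gh: "holo_on (Gf \<beta>) U" if "\<beta> \<in> B" for \<beta>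
      unfolding Gf_def
      by (rule SH_holo[OF oU SH_mult[OF SH_poly SH_inverse[OF SH_subset[OF hSH Usub] hU]]]) (use B(2) that in auto)
    have eqU: "p x = (\<Sum>\<beta>\<in>B. Gf \<beta> x * F \<beta> x)" if x: "x \<in> U" for x
      unfolding B(3)[rule_format] using hU[OF x]
      by (intro sum.cong refl) (simp add: Gf_def F_def field_simps)
    obtain e where e: "bij_betw e {0..<card B} B" using ex_bij_betw_nat_finite[OF B(1)] by blast
    have eB: "e i \<in> B" if "i < card B" for i using e that by (auto simp: bij_betw_def)
    show "p \<in> poly_germ_ideal \<aa> z"
      unfolding poly_germ_ideal_def mem_Collect_eq
    proof (rule conjI[OF pp], rule exI[of _ U], rule exI[of _ "card B"], rule exI[of _ "\<lambda>i. F (e i)"],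
        rule exI[of _ "\<lambda>i. Gf (e i)"], intro conjI oU zU allI impI ballI)
      fix i assume "i < card B"
      then show "F (e i) \<in> \<aa>" "holo_on (Gf (e i)) U" using Fa Gh eB by auto
    next
      fix x assume x: "x \<in> U"
      have "(\<Sum>i<card B. Gf (e i) x * F (e i) x) = (\<Sum>\<beta>\<in>B. Gf \<beta> x * F \<beta> x)"
        unfolding atLeast0LessThan[symmetric] by (rule sum.reindex_bij_betw[OF e])
      then show "p x = (\<Sum>i<card B. Gf (e i) x * F (e i) x)" using eqU[OF x] by simp
    qed
  qed
  show ?thesis
  proof
    show "\<exists>k. maxideal_pow z (k + 1) \<subseteq> poly_germ_ideal \<aa> z" using main by blast
    show "poly_order \<aa> z \<le> \<kappa>" unfolding poly_order_def by (rule Least_le) (rule main)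
  qed
qed


end
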